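(* Fix a dataset $\mathbb D_N$ and a point $x\in\mathcal X$. Let $\lambda_\dagger(x|\mathbb D_N)$ be the minimum eigenvalue of $\mathcal F(x|\mathbb D_N)=\beta^2\Sigma_{L_gB}(x|\mathbb D_N)-\widehat{L_gB}(x|\mathbb D_N)^T\widehat{L_gB}(x|\mathbb D_N)$. Then the GP-CBF-SOCP is feasible at $x$ if and only if $$\begin{bmatrix}\widehat{L_fB}+\gamma(B(x))\\ \widehat{L_gB}^T\end{bmatrix}^T\Sigma_B^{-1}\begin{bmatrix}\widehat{L_fB}+\gamma(B(x))\\ \widehat{L_gB}^T\end{bmatrix}\ge\beta^2$$ holds (all quantities evaluated at $(x|\mathbb D_N)$) and one of the following three cases holds: 1. $\lambda_\dagger(x|\mathbb D_N)<0$; 2. $\lambda_\dagger(x|\mathbb D_N)>0$ and $$\widehat{L_fB}+\gamma(B(x))-\widehat{L_gB}\,\mathcal F^{-1}\Big[\beta^2(\Sigma_{L_gB}^{1/2})^T\Sigma_{L_fB}^{1/2}-\widehat{L_gB}^T\big(\widehat{L_fB}+\gamma(B(x))\big)\Big]\ge0;$$ 3. $\lambda_\dagger(x|\mathbb D_N)=0$ and $$\widehat{L_fB}+\gamma(B(x))-\widehat{L_gB}\,\Sigma_{L_gB}^{-1}(\Sigma_{L_gB}^{1/2})^T\Sigma_{L_fB}^{1/2}>0.$$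
   Context: Consider $\dot x=f(x)+g(x)u$ with $x\in\mathcal X\subset\mathbb R^n$ and $u\in\mathbb R^m$, where $f,g$ are locally Lipschitz and unknown. A nominal model $\tilde f,\tilde g$ is available. Let $B:\mathcal X\to\mathbb R$ be $C^1$, let $\gamma$ be extended class-$\mathcal K_\infty$, and let $u_{\text{ref}}$ be a reference controller. Lie derivatives: $L_{\tilde f}B=\nabla B\,\tilde f$ and $L_{\tilde g}B=\nabla B\,\tilde g\in\mathbb R^{1\times m}$; $L_fB$ and $L_gB$ are defined similarly. Set $\Delta_B(x,u)=(L_fB-L_{\tilde f}B)(x)+(L_gB-L_{\tilde g}B)(x)u$. A dataset $\mathbb D_N=\{((x_j,u_j),z_j)\}$ consists of $z_j=\Delta_B(x_j,u_j)+\epsilon_j$. GP model with the affine dot product kernel $k_c((x,y),(x',y'))=y^T\mathrm{diag}(k_1(x,x'),\dots,k_{m+1}(x,x'))y'$: - Let $y_j=[1,u_j^T]^T$, $\mathbf z=(z_j)$, let $\sigma_n>0$, and let $K_c$ be the Gram matrix on the data. - Let $K_{**}(x)=\mathrm{diag}(k_i(x,x))$, and let $K_{*Y}(x)$ be the $(m+1)\times N$ matrix with entries $k_i(x,x_j)(y_j)_i$. - Define $m_B(x|\mathbb D_N)=K_{*Y}(K_c+\sigma_n^2I)^{-1}\mathbf z$ and $\Sigma_B(x|\mathbb D_N)=K_{**}-K_{*Y}(K_c+\sigma_n^2I)^{-1}K_{*Y}^T$, which is positive definite. - The posterior mean and standard deviation are $\mu_B(x,u|\mathbb D_N)=m_B^T[1;u]$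 and $\sigma_B=\sqrt{[1,u^T]\Sigma_B[1;u]}$. $\beta>0$ is a constant. Derived quantities: - $\widehat{L_fB}=L_{\tilde f}B+(m_B)_1$ and $\widehat{L_gB}=L_{\tilde g}B+((m_B)_2,\dots,(m_B)_{m+1})\in\mathbb R^{1\times m}$. - $\Sigma_B^{1/2}$ is the symmetric positive definite square root of $\Sigma_B$. - $\Sigma_{L_fB}^{1/2}\in\mathbb R^{m+1}$ is the first column of $\Sigma_B^{1/2}$, and $\Sigma_{L_gB}^{1/2}\in\mathbb R^{(m+1)\times m}$ consists of its columns $2,\dots,m+1$. - $\Sigma_{L_gB}=(\Sigma_{L_gB}^{1/2})^T\Sigma_{L_gB}^{1/2}$, which equals the lower-right $m\times m$ block of $\Sigma_B$. The GP-CBF-SOCP at $x$ is: minimize $\|u-u_{\text{ref}}(x)\|_2^2$ subject to $L_{\tilde f}B(x)+L_{\tilde g}B(x)u+\mu_B(x,u|\mathbb D_N)-\beta\sigma_B(x,u|\mathbb D_N)+\gamma(B(x))\ge0$. It is feasible at $x$ if this constraint set is nonempty. *)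

theory Defs
  imports "HOL-Analysis.Euclidean_Space" "Jordan_Normal_Form.Char_Poly"
begin

definition sym_mat :: "real mat \<Rightarrow> bool" where
  "sym_mat A \<longleftrightarrow> A \<in> carrier_mat (dim_row A) (dim_row A) \<and> transpose_mat A = A"

definition pos_def_mat :: "real mat \<Rightarrow> bool" where
  "pos_def_mat A \<longleftrightarrow> sym_mat A \<and>
     (\<forall>v \<in> carrier_vec (dim_row A). v \<noteq> 0\<^sub>v (dim_row A) \<longrightarrow> scalar_prod v (A *\<^sub>v v) > 0)"

text \<open>Inverse of a square matrix (meaningful when the matrix is invertible).\<close>
definition inv_of :: "real mat \<Rightarrow> real mat" where
  "inv_of A = (THE M. M \<in> carrier_mat (dim_row A) (dim_row A) \<and>
                      A * M = 1\<^sub>m (dim_row A) \<and> M * A = 1\<^sub>m (dim_row A))"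

definition sqrt_pd :: "real mat \<Rightarrow> real mat" where
  "sqrt_pd A = (THE S. S \<in> carrier_mat (dim_row A) (dim_row A) \<and> pos_def_mat S \<and> S * S = A)"

definition min_eigenvalue :: "real mat \<Rightarrow> real" where
  "min_eigenvalue A = Min {l. eigenvalue A l}"

definition ext_class_K_inf :: "(real \<Rightarrow> real) \<Rightarrow> bool" where
  "ext_class_K_inf \<gamma> \<longleftrightarrow> continuous_on UNIV \<gamma> \<and> strict_mono \<gamma> \<and> \<gamma> 0 = 0 \<and>
     filterlim \<gamma> at_top at_top \<and> filterlim \<gamma> at_bot at_bot"

(* ---------- GP model with the affine dot product kernel ----------
   m  : input dimension;  y = [1; u] has dimension m+1 (index 0 is the "1" entry)
   k  : kernels k_1..k_{m+1}, here indexed k 0 .. k m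
   xs, us : data points x_j, u_j (j < N);  z : vector of measurements (dim N)  *)

definition yvec :: "real vec \<Rightarrow> real vec" where
  "yvec u = vCons 1 u"

definition gram_Kc :: "nat \<Rightarrow> (nat \<Rightarrow> 'a \<Rightarrow> 'a \<Rightarrow> real) \<Rightarrow> nat \<Rightarrow> (nat \<Rightarrow> 'a) \<Rightarrow> (nat \<Rightarrow> real vec) \<Rightarrow> real mat" where
  "gram_Kc m k N xs us = mat N N (\<lambda>(j, l).
      \<Sum>i<m+1. yvec (us j) $ i * k i (xs j) (xs l) * yvec (us l) $ i)"

definition K_ss :: "nat \<Rightarrow> (nat \<Rightarrow> 'a \<Rightarrow> 'a \<Rightarrow> real) \<Rightarrow> 'a \<Rightarrow> real mat" where
  "K_ss m k x = mat (m+1) (m+1) (\<lambda>(i, i'). if i = i' then k i x x else 0)"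

definition K_sY :: "nat \<Rightarrow> (nat \<Rightarrow> 'a \<Rightarrow> 'a \<Rightarrow> real) \<Rightarrow> nat \<Rightarrow> (nat \<Rightarrow> 'a) \<Rightarrow> (nat \<Rightarrow> real vec) \<Rightarrow> 'a \<Rightarrow> real mat" where
  "K_sY m k N xs us x = mat (m+1) N (\<lambda>(i, j). k i x (xs j) * yvec (us j) $ i)"

definition m_B :: "nat \<Rightarrow> (nat \<Rightarrow> 'a \<Rightarrow> 'a \<Rightarrow> real) \<Rightarrow> real \<Rightarrow> nat \<Rightarrow> (nat \<Rightarrow> 'a) \<Rightarrow> (nat \<Rightarrow> real vec) \<Rightarrow> real vec \<Rightarrow> 'a \<Rightarrow> real vec" where
  "m_B m k \<sigma>n N xs us z x =
     K_sY m k N xs us x *\<^sub>v (inv_of (gram_Kc m k N xs us + \<sigma>n\<^sup>2 \<cdot>\<^sub>m 1\<^sub>m N) *\<^sub>v z)"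

definition Sigma_B :: "nat \<Rightarrow> (nat \<Rightarrow> 'a \<Rightarrow> 'a \<Rightarrow> real) \<Rightarrow> real \<Rightarrow> nat \<Rightarrow> (nat \<Rightarrow> 'a) \<Rightarrow> (nat \<Rightarrow> real vec) \<Rightarrow> 'a \<Rightarrow> real mat" where
  "Sigma_B m k \<sigma>n N xs us x =
     K_ss m k x - K_sY m k N xs us x * inv_of (gram_Kc m k N xs us + \<sigma>n\<^sup>2 \<cdot>\<^sub>m 1\<^sub>m N)
                   * transpose_mat (K_sY m k N xs us x)"

definition mu_B where
  "mu_B m k \<sigma>n N xs us z x u = scalar_prod (m_B m k \<sigma>n N xs us z x) (yvec u)"

definition sigma_B where
  "sigma_B m k \<sigma>n N xs us x u =
     sqrt (scalar_prod (yvec u) (Sigma_B m k \<sigma>n N xs us x *\<^sub>v yvec u))"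

(* ---------- Lie derivatives of B along the nominal model ----------
   DB is the (Frechet) derivative of B at x, i.e. DB v = \<nabla>B(x) v.
   gt x is the n x m matrix \<tilde>g(x) given by its columns gt x 0, ..., gt x (m-1). *)

definition Lie_ft :: "('a \<Rightarrow> real) \<Rightarrow> ('a \<Rightarrow> 'a) \<Rightarrow> 'a \<Rightarrow> real" where
  "Lie_ft DB ft x = DB (ft x)"

definition Lie_gt :: "nat \<Rightarrow> ('a \<Rightarrow> real) \<Rightarrow> ('a \<Rightarrow> nat \<Rightarrow> 'a) \<Rightarrow> 'a \<Rightarrow> real vec" where
  "Lie_gt m DB gt x = vec m (\<lambda>i. DB (gt x i))"

definition socp_constraint where
  "socp_constraint m k \<sigma>n N xs us z \<beta> \<gamma> B DB ft gt x u \<longleftrightarrow>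
     Lie_ft DB ft x + scalar_prod (Lie_gt m DB gt x) u + mu_B m k \<sigma>n N xs us z x u
       - \<beta> * sigma_B m k \<sigma>n N xs us x u + \<gamma> (B x) \<ge> 0"

definition socp_feasible where
  "socp_feasible m k \<sigma>n N xs us z \<beta> \<gamma> B DB ft gt x \<longleftrightarrow>
     (\<exists>u \<in> carrier_vec m. socp_constraint m k \<sigma>n N xs us z \<beta> \<gamma> B DB ft gt x u)"

definition LfB_hat where
  "LfB_hat m k \<sigma>n N xs us z DB ft x = Lie_ft DB ft x + m_B m k \<sigma>n N xs us z x $ 0"

definition LgB_hat where
  "LgB_hat m k \<sigma>n N xs us z DB gt x =
     Lie_gt m DB gt x + vec m (\<lambda>i. m_B m k \<sigma>n N xs us z x $ (i+1))"

definition Sig_LfB_half where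
  "Sig_LfB_half m k \<sigma>n N xs us x = col (sqrt_pd (Sigma_B m k \<sigma>n N xs us x)) 0"

definition Sig_LgB_half where
  "Sig_LgB_half m k \<sigma>n N xs us x =
     mat (m+1) m (\<lambda>(i, j). sqrt_pd (Sigma_B m k \<sigma>n N xs us x) $$ (i, j+1))"

definition Sig_LgB where
  "Sig_LgB m k \<sigma>n N xs us x =
     transpose_mat (Sig_LgB_half m k \<sigma>n N xs us x) * Sig_LgB_half m k \<sigma>n N xs us x"

definition F_mat where
  "F_mat m k \<sigma>n N xs us z \<beta> DB gt x =
     \<beta>\<^sup>2 \<cdot>\<^sub>m Sig_LgB m k \<sigma>n N xs us x
     - mat m m (\<lambda>(i, j). LgB_hat m k \<sigma>n N xs us z DB gt x $ i * LgB_hat m k \<sigma>n N xs us z DB gt x $ j)"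

end

theory Submission
  imports Defs "Jordan_Normal_Form.Schur_Decomposition"
begin


lemma sym_real_eigen:
  fixes A :: "real mat"
  assumes A: "A \<in> carrier_mat n n" and sym: "A\<^sup>T = A" and n: "n > 0"
  shows "\<exists>e v. v \<in> carrier_vec n \<and> v \<noteq> 0\<^sub>v n \<and> A *\<^sub>v v = e \<cdot>\<^sub>v v"
proof -
  define Ac where "Ac = map_mat complex_of_real A"
  have Ac: "Ac \<in> carrier_mat n n" using A unfolding Ac_def by simp
  obtain as where cp: "char_poly Ac = (\<Prod>a\<leftarrow>as. [:- a, 1:])" and len: "length as = n"
    using char_poly_factorized[OF Ac] by blast
  then obtain c as' where as: "as = c # as'" using n by (cases as) auto
  have "poly (char_poly Ac) c = 0" unfolding cp as by simp
  hence "eigenvalue Ac c" using eigenvalue_root_char_poly[OF Ac] by simp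
  then obtain vc where ev: "eigenvector Ac vc c" unfolding eigenvalue_def by blast
  hence vc: "vc \<in> carrier_vec n" and vc0: "vc \<noteq> 0\<^sub>v n" and Avc: "Ac *\<^sub>v vc = c \<cdot>\<^sub>v vc"
    unfolding eigenvector_def using Ac by auto
  define x where "x = map_vec Re vc"
  define y where "y = map_vec Im vc"
  have x: "x \<in> carrier_vec n" and y: "y \<in> carrier_vec n" using vc unfolding x_def y_def by auto
  have comp: "(Ac *\<^sub>v vc) $ i = (\<Sum>j<n. complex_of_real (A $$ (i,j)) * vc $ j)" if "i < n" for i
    using that A vc unfolding Ac_def by (auto simp: mult_mat_vec_def scalar_prod_def row_def lessThan_atLeast0)
  have Ax: "A *\<^sub>v x = Re c \<cdot>\<^sub>v x - Im c \<cdot>\<^sub>v y"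
  proof (rule eq_vecI)
    fix i assume i: "i < dim_vec (Re c \<cdot>\<^sub>v x - Im c \<cdot>\<^sub>v y)"
    hence i: "i < n" using y by simp
    have "Re ((Ac *\<^sub>v vc) $ i) = Re (c * vc $ i)" using Avc i vc by simp
    hence "(\<Sum>j<n. A $$ (i,j) * Re (vc $ j)) = Re c * Re (vc $ i) - Im c * Im (vc $ i)"
      unfolding comp[OF i] by (simp add: Re_sum)
    thus "(A *\<^sub>v x) $ i = (Re c \<cdot>\<^sub>v x - Im c \<cdot>\<^sub>v y) $ i"
      using i A x y vc unfolding x_def y_def
      by (simp add: mult_mat_vec_def scalar_prod_def row_def lessThan_atLeast0)
  qed (use A y in simp)
  have Ay: "A *\<^sub>v y = Im c \<cdot>\<^sub>v x + Re c \<cdot>\<^sub>v y"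
  proof (rule eq_vecI)
    fix i assume i: "i < dim_vec (Im c \<cdot>\<^sub>v x + Re c \<cdot>\<^sub>v y)"
    hence i: "i < n" using y by simp
    have "Im ((Ac *\<^sub>v vc) $ i) = Im (c * vc $ i)" using Avc i vc by simp
    hence "(\<Sum>j<n. A $$ (i,j) * Im (vc $ j)) = Im c * Re (vc $ i) + Re c * Im (vc $ i)"
      unfolding comp[OF i] by (simp add: Im_sum)
    thus "(A *\<^sub>v y) $ i = (Im c \<cdot>\<^sub>v x + Re c \<cdot>\<^sub>v y) $ i"
      using i A x y vc unfolding x_def y_def
      by (simp add: mult_mat_vec_def scalar_prod_def row_def lessThan_atLeast0)
  qed (use A y in simp)
  have "y \<bullet> (A *\<^sub>v x) = x \<bullet> (A *\<^sub>v y)"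
    using transpose_vec_mult_scalar[OF A x y] sym comm_scalar_prod[of "A *\<^sub>v y" n x] A x y by simp
  hence "Re c * (y \<bullet> x) - Im c * (y \<bullet> y) = Im c * (x \<bullet> x) + Re c * (x \<bullet> y)"
    unfolding Ax Ay using x y
    by (simp add: scalar_prod_add_distrib scalar_prod_minus_distrib)
  hence "Im c * (x \<bullet> x + y \<bullet> y) = 0" using comm_scalar_prod[OF x y] by (simp add: algebra_simps)
  moreover have "x \<bullet> x + y \<bullet> y > 0"
  proof -
    obtain i where i: "i < n" "vc $ i \<noteq> 0" using vc vc0 by (metis eq_vecI carrier_vecD index_zero_vec)
    have "x \<bullet> x + y \<bullet> y = (\<Sum>j<n. (Re (vc$j))\<^sup>2 + (Im (vc$j))\<^sup>2)"
      using x y unfolding x_def y_def by (simp add: scalar_prod_def lessThan_atLeast0 power2_eq_square sum.distrib)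
    also have "\<dots> \<ge> (Re (vc$i))\<^sup>2 + (Im (vc$i))\<^sup>2"
      by (rule member_le_sum) (use i in auto)
    finally show ?thesis using i(2) complex_eq_0[of "vc $ i"] zero_le_power2[of "Re (vc $ i)"] zero_le_power2[of "Im (vc $ i)"] by linarith
  qed
  ultimately have Im0: "Im c = 0" by simp
  show ?thesis
  proof (cases "x = 0\<^sub>v n")
    case True
    hence "y \<noteq> 0\<^sub>v n" using vc vc0 unfolding x_def y_def
      by (metis complex_eqI eq_vecI carrier_vecD index_map_vec index_zero_vec zero_complex.simps)
    moreover have "A *\<^sub>v y = Re c \<cdot>\<^sub>v y" unfolding Ay Im0 using x y by (intro eq_vecI) auto
    ultimately show ?thesis using y by blast
  next
    case False
    moreover have "A *\<^sub>v x = Re c \<cdot>\<^sub>v x" unfolding Ax Im0 using x y by (intro eq_vecI) auto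
    ultimately show ?thesis using x by blast
  qed
qed
lemma orth_complete:
  fixes v :: "real vec"
  assumes v: "v \<in> carrier_vec n" and v1: "v \<bullet> v = 1"
  shows "\<exists>W \<in> carrier_mat n n. W\<^sup>T * W = 1\<^sub>m n \<and> col W 0 = v"
proof -
  have v0: "v \<noteq> 0\<^sub>v n" using v1 v by auto
  interpret cof_vec_space n "TYPE(real)" .
  define b where "b = basis_completion v"
  from basis_completion[OF v v0, folded b_def]
  have dist_b: "distinct b" 
    and indep: "\<not> lin_dep (set b)" and b: "set b \<subseteq> carrier_vec n" and hdb: "hd b = v" 
    and len_b: "length b = n" by auto
  have n: "n > 0" using v0 v by (cases n) auto
  from hdb len_b n obtain vs where bv: "b = v # vs" by (cases b, auto)
  define ws where "ws = gram_schmidt n b"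
  from gram_schmidt_result[OF b dist_b indep ws_def]
  have ws: "set ws \<subseteq> carrier_vec n" "corthogonal ws" "length ws = n" 
    by (auto simp: len_b)
  have hdws: "hd ws = v" unfolding ws_def bv using v by simp
  define us where "us = map (\<lambda>w. (1 / sqrt (w \<bullet> w)) \<cdot>\<^sub>v w) ws"
  have lus: "length us = n" using ws unfolding us_def by simp
  have us: "set us \<subseteq> carrier_vec n" using ws unfolding us_def by auto
  have wpos: "ws ! i \<bullet> ws ! i > 0" if "i < n" for i
  proof -
    have "ws ! i \<bullet> ws ! i \<noteq> 0" using corthogonalD[OF ws(2), of i i] that ws by simp
    moreover have "ws ! i \<bullet> ws ! i \<ge> 0" unfolding scalar_prod_def by (auto intro: sum_nonneg)
    ultimately show ?thesis by simp
  qed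
  have uij: "us ! i \<bullet> us ! j = (if i = j then 1 else 0)" if "i < n" "j < n" for i j
  proof -
    have wi: "ws ! i \<in> carrier_vec n" "ws ! j \<in> carrier_vec n" using ws that by auto
    have "us ! i \<bullet> us ! j = (1 / sqrt (ws!i \<bullet> ws!i)) * (1 / sqrt (ws!j \<bullet> ws!j)) * (ws!i \<bullet> ws!j)"
      unfolding us_def using that ws wi by (simp add: smult_scalar_prod_distrib scalar_prod_smult_distrib)
    moreover have "ws!i \<bullet> ws!j = 0" if "i \<noteq> j" using corthogonalD[OF ws(2), of i j] \<open>i < n\<close> \<open>j < n\<close> ws that by simp
    moreover have "(1 / sqrt (ws!i \<bullet> ws!i)) * (1 / sqrt (ws!i \<bullet> ws!i)) * (ws!i \<bullet> ws!i) = 1"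
      using wpos[OF that(1)] by (simp add: field_simps)
    ultimately show ?thesis by auto
  qed
  define W where "W = mat_of_cols n us"
  have W: "W \<in> carrier_mat n n" unfolding W_def using mat_of_cols_carrier(1)[of n us] lus by simp
  have colW: "col W j = us ! j" if "j < n" for j
    unfolding W_def using that lus us by (simp add: col_mat_of_cols subset_code(1))
  have "W\<^sup>T * W = 1\<^sub>m n"
    by (rule eq_matI) (use W colW uij in auto)
  moreover have "col W 0 = v"
  proof -
    have "ws ! 0 = v" using hdws ws n by (cases ws) auto
    thus ?thesis using colW[OF n] unfolding us_def using ws n v1 by simp
  qed
  ultimately show ?thesis using W by blast
qed
lemma spectral_thm:
  fixes A :: "real mat"
  assumes "A \<in> carrier_mat n n" "A\<^sup>T = A"
  shows "\<exists>Q D. Q \<in> carrier_mat n n \<and> D \<in> carrier_mat n n \<and> diagonal_mat D \<and>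
     Q\<^sup>T * Q = 1\<^sub>m n \<and> Q * Q\<^sup>T = 1\<^sub>m n \<and> A = Q * D * Q\<^sup>T"
  using assms
proof (induction n arbitrary: A)
  case 0
  show ?case
    by (rule exI[of _ "1\<^sub>m 0"], rule exI[of _ "1\<^sub>m 0"]) (use 0 in \<open>auto simp: diagonal_mat_def intro!: eq_matI\<close>)
next
  case (Suc k)
  note A = Suc.prems(1) and sym = Suc.prems(2)
  obtain e v0 where v0: "v0 \<in> carrier_vec (Suc k)" "v0 \<noteq> 0\<^sub>v (Suc k)" "A *\<^sub>v v0 = e \<cdot>\<^sub>v v0"
    using sym_real_eigen[OF A sym] by auto
  have pos: "v0 \<bullet> v0 > 0"
  proof -
    obtain i where i: "i < Suc k" "v0 $ i \<noteq> 0" using v0 by (metis eq_vecI carrier_vecD index_zero_vec)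
    have "v0 $ i * v0 $ i \<le> (\<Sum>j\<in>{0..<Suc k}. v0 $ j * v0 $ j)"
      using i by (intro member_le_sum) auto
    thus ?thesis using v0(1) i(2) unfolding scalar_prod_def
      by (smt (verit) carrier_vecD not_real_square_gt_zero)
  qed
  define v where "v = (1 / sqrt (v0 \<bullet> v0)) \<cdot>\<^sub>v v0"
  have v: "v \<in> carrier_vec (Suc k)" using v0 unfolding v_def by simp
  have v1: "v \<bullet> v = 1" unfolding v_def using v0 pos
    by (simp add: smult_scalar_prod_distrib scalar_prod_smult_distrib field_simps)
  have Av: "A *\<^sub>v v = e \<cdot>\<^sub>v v" unfolding v_def using v0 A
    by (simp add: mult_mat_vec) (intro eq_vecI, auto)
  obtain W where W: "W \<in> carrier_mat (Suc k) (Suc k)" and WW: "W\<^sup>T * W = 1\<^sub>m (Suc k)" and cW: "col W 0 = v"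
    using orth_complete[OF v v1] by blast
  have WW2: "W * W\<^sup>T = 1\<^sub>m (Suc k)" using mat_mult_left_right_inverse[OF _ W WW] W by simp
  define A' where "A' = W\<^sup>T * A * W"
  have A': "A' \<in> carrier_mat (Suc k) (Suc k)" unfolding A'_def using W A by auto
  have symA': "A'\<^sup>T = A'"
  proof -
    have "A'\<^sup>T = W\<^sup>T * (W\<^sup>T * A)\<^sup>T" unfolding A'_def
      by (rule transpose_mult[of _ "Suc k" "Suc k"]) (use W A in auto)
    also have "(W\<^sup>T * A)\<^sup>T = A\<^sup>T * W"
      using transpose_mult[of "W\<^sup>T" "Suc k" "Suc k" A "Suc k"] W A by simp
    finally show ?thesis unfolding A'_def sym using W A
      by (simp add: assoc_mult_mat[of _ "Suc k" "Suc k" _ "Suc k" _ "Suc k"])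
  qed
  have "col A' 0 = W\<^sup>T *\<^sub>v (A *\<^sub>v col W 0)"
    unfolding A'_def using col_mult2[of "W\<^sup>T * A" "Suc k" "Suc k" W "Suc k" 0]
      assoc_mult_mat_vec[of "W\<^sup>T" "Suc k" "Suc k" A "Suc k" "col W 0"] W A v cW by simp
  also have "\<dots> = e \<cdot>\<^sub>v (W\<^sup>T *\<^sub>v col W 0)" unfolding cW Av using W v by (simp add: mult_mat_vec)
  also have "W\<^sup>T *\<^sub>v col W 0 = col (W\<^sup>T * W) 0" using col_mult2[of "W\<^sup>T" "Suc k" "Suc k" W "Suc k" 0] W by simp
  also have "\<dots> = unit_vec (Suc k) 0" unfolding WW by simp
  finally have c0: "col A' 0 = e \<cdot>\<^sub>v unit_vec (Suc k) 0" .
  have A'i0: "A' $$ (i, 0) = (if i = 0 then e else 0)" if "i < Suc k" for i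
    using arg_cong[OF c0, of "\<lambda>x. x $ i"] that A' by (auto simp: unit_vec_def)
  have A'0j: "A' $$ (0, j) = (if j = 0 then e else 0)" if "j < Suc k" for j
    using A'i0[OF that] symA' that A' by (metis carrier_matD index_transpose_mat(1) zero_less_Suc)
  have symE: "A' $$ (a, b) = A' $$ (b, a)" if "a < Suc k" "b < Suc k" for a b
    using symA' A' that by (metis carrier_matD index_transpose_mat(1))
  define A3 where "A3 = mat k k (\<lambda>(i,j). A' $$ (Suc i, Suc j))"
  have A3: "A3 \<in> carrier_mat k k" unfolding A3_def by simp
  have symA3: "A3\<^sup>T = A3" unfolding A3_def
    by (rule eq_matI) (use symE in auto)
  obtain Q3 D3 where Q3: "Q3 \<in> carrier_mat k k" and D3: "D3 \<in> carrier_mat k k" and dD3: "diagonal_mat D3"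
    and QQ3: "Q3\<^sup>T * Q3 = 1\<^sub>m k" and QQ3': "Q3 * Q3\<^sup>T = 1\<^sub>m k" and AQ3: "A3 = Q3 * D3 * Q3\<^sup>T"
    using Suc.IH[OF A3 symA3] by blast
  define E1 where "E1 = mat 1 1 (\<lambda>_. e)"
  have E1: "E1 \<in> carrier_mat 1 1" unfolding E1_def by simp
  have A'blk: "A' = four_block_mat E1 (0\<^sub>m 1 k) (0\<^sub>m k 1) A3"
    by (rule eq_matI) (use A' A'i0 A'0j in \<open>auto simp: four_block_mat_def E1_def A3_def\<close>)
  define Q' where "Q' = four_block_mat (1\<^sub>m 1) (0\<^sub>m 1 k) (0\<^sub>m k 1) Q3"
  define D' where "D' = four_block_mat E1 (0\<^sub>m 1 k) (0\<^sub>m k 1) D3"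
  have Q': "Q' \<in> carrier_mat (Suc k) (Suc k)" unfolding Q'_def using Q3 by auto
  have D': "D' \<in> carrier_mat (Suc k) (Suc k)" unfolding D'_def using D3 E1 by auto
  have Q'T: "Q'\<^sup>T = four_block_mat (1\<^sub>m 1) (0\<^sub>m 1 k) (0\<^sub>m k 1) Q3\<^sup>T"
    unfolding Q'_def using Q3 by (subst transpose_four_block_mat) auto
  have one_blk: "four_block_mat (1\<^sub>m 1) (0\<^sub>m 1 k) (0\<^sub>m k 1) (1\<^sub>m k) = (1\<^sub>m (Suc k) :: real mat)"
    by (rule eq_matI) (auto simp: four_block_mat_def)
  have QD: "Q' * D' = four_block_mat E1 (0\<^sub>m 1 k) (0\<^sub>m k 1) (Q3 * D3)"
    unfolding Q'_def D'_def using Q3 D3 E1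
    by (subst mult_four_block_mat) auto
  have "Q' * D' * Q'\<^sup>T = four_block_mat E1 (0\<^sub>m 1 k) (0\<^sub>m k 1) (Q3 * D3 * Q3\<^sup>T)"
    unfolding Q'T QD using Q3 D3 E1
    by (subst mult_four_block_mat) auto
  hence A'eq: "A' = Q' * D' * Q'\<^sup>T" unfolding A'blk AQ3 by simp
  have QQ': "Q'\<^sup>T * Q' = 1\<^sub>m (Suc k)"
    unfolding Q'T unfolding Q'_def using Q3 QQ3 one_blk
    by (subst mult_four_block_mat) auto
  have dD': "diagonal_mat D'" using dD3 D3 E1 unfolding D'_def diagonal_mat_def
    by (auto simp: four_block_mat_def E1_def)
  define Q where "Q = W * Q'"
  have Q: "Q \<in> carrier_mat (Suc k) (Suc k)" unfolding Q_def using W Q' by simp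
  have QT: "Q\<^sup>T = Q'\<^sup>T * W\<^sup>T" unfolding Q_def by (rule transpose_mult[of _ "Suc k" "Suc k"]) (use W Q' in auto)
  have "Q\<^sup>T * Q = Q'\<^sup>T * (W\<^sup>T * W) * Q'" unfolding QT unfolding Q_def using W Q'
    by (simp add: assoc_mult_mat[of _ "Suc k" "Suc k" _ "Suc k" _ "Suc k"])
  hence QQ: "Q\<^sup>T * Q = 1\<^sub>m (Suc k)" unfolding WW using Q' QQ' by simp
  have QQ2: "Q * Q\<^sup>T = 1\<^sub>m (Suc k)" using mat_mult_left_right_inverse[OF _ Q QQ] Q by simp
  have "Q * D' * Q\<^sup>T = W * (Q' * D' * Q'\<^sup>T) * W\<^sup>T" unfolding QT unfolding Q_def
    using W Q' D' by (simp add: assoc_mult_mat[of _ "Suc k" "Suc k" _ "Suc k" _ "Suc k"])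
  also have "\<dots> = W * A' * W\<^sup>T" unfolding A'eq ..
  also have "\<dots> = (W * W\<^sup>T) * A * (W * W\<^sup>T)" unfolding A'_def
    using W A by (simp add: assoc_mult_mat[of _ "Suc k" "Suc k" _ "Suc k" _ "Suc k"])
  finally have "A = Q * D' * Q\<^sup>T" unfolding WW2 using A by simp
  thus ?case using Q D' dD' QQ QQ2 by blast
qed

lemma diag_mult_vec:
  fixes D :: "real mat"
  assumes D: "D \<in> carrier_mat n n" and dD: "diagonal_mat D" and w: "w \<in> carrier_vec n" and i: "i < n"
  shows "(D *\<^sub>v w) $ i = D $$ (i,i) * w $ i"
proof -
  have "(D *\<^sub>v w) $ i = (\<Sum>j\<in>{0..<n}. D $$ (i,j) * w $ j)"
    using D w i by (simp add: mult_mat_vec_def scalar_prod_def row_def)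
  also have "\<dots> = D $$ (i,i) * w $ i + (\<Sum>j\<in>{0..<n} - {i}. D $$ (i,j) * w $ j)"
    using i by (subst sum.remove[of _ i]) auto
  also have "\<dots> = D $$ (i,i) * w $ i"
    using dD D i unfolding diagonal_mat_def by (subst sum.neutral) auto
  finally show ?thesis .
qed

locale sdec =
  fixes A Q D :: "real mat" and n :: nat
  assumes A: "A \<in> carrier_mat n n" and Q: "Q \<in> carrier_mat n n" and D: "D \<in> carrier_mat n n"
    and dD: "diagonal_mat D" and QQ: "Q\<^sup>T * Q = 1\<^sub>m n" and QQ2: "Q * Q\<^sup>T = 1\<^sub>m n"
    and AQ: "A = Q * D * Q\<^sup>T"
begin

lemma QT: "Q\<^sup>T \<in> carrier_mat n n" using Q by simp

lemma Av: "v \<in> carrier_vec n \<Longrightarrow> A *\<^sub>v v = Q *\<^sub>v (D *\<^sub>v (Q\<^sup>T *\<^sub>v v))"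
  unfolding AQ using Q D by (simp add: assoc_mult_mat_vec[of _ n n _ n])

lemma QQv: "v \<in> carrier_vec n \<Longrightarrow> Q *\<^sub>v (Q\<^sup>T *\<^sub>v v) = v"
  using Q QQ2 by (simp flip: assoc_mult_mat_vec[of _ n n _ n])

lemma QQv2: "v \<in> carrier_vec n \<Longrightarrow> Q\<^sup>T *\<^sub>v (Q *\<^sub>v v) = v"
  using Q QQ by (simp flip: assoc_mult_mat_vec[of _ n n _ n])

lemma Q0: "Q *\<^sub>v 0\<^sub>v n = 0\<^sub>v n" using Q by (intro eq_vecI) auto

lemma QT0: assumes v: "v \<in> carrier_vec n" "v \<noteq> 0\<^sub>v n" shows "Q\<^sup>T *\<^sub>v v \<noteq> 0\<^sub>v n"
proof
  assume "Q\<^sup>T *\<^sub>v v = 0\<^sub>v n"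
  hence "Q *\<^sub>v (Q\<^sup>T *\<^sub>v v) = 0\<^sub>v n" using Q0 by simp
  thus False using QQv[OF v(1)] v(2) by simp
qed

lemma eig_diag: assumes "eigenvalue A l" shows "\<exists>i<n. l = D $$ (i,i)"
proof -
  obtain v where "eigenvector A v l" using assms unfolding eigenvalue_def by blast
  hence v: "v \<in> carrier_vec n" "v \<noteq> 0\<^sub>v n" "A *\<^sub>v v = l \<cdot>\<^sub>v v"
    unfolding eigenvector_def carrier_matD(1)[OF A] by blast+
  define w where "w = Q\<^sup>T *\<^sub>v v"
  have w: "w \<in> carrier_vec n" unfolding w_def using mult_mat_vec_carrier[OF QT v(1)] .
  have w0: "w \<noteq> 0\<^sub>v n" unfolding w_def using QT0[OF v(1,2)] .
  have "D *\<^sub>v w = Q\<^sup>T *\<^sub>v (A *\<^sub>v v)" unfolding Av[OF v(1)] w_def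
    using QQv2[OF mult_mat_vec_carrier[OF D w]] unfolding w_def by simp
  also have "\<dots> = l \<cdot>\<^sub>v w" unfolding v(3) w_def using Q v by (simp add: mult_mat_vec)
  finally have Dw: "D *\<^sub>v w = l \<cdot>\<^sub>v w" .
  obtain i where i: "i < n" "w $ i \<noteq> 0" using w w0 by (metis eq_vecI carrier_vecD index_zero_vec)
  have "D $$ (i,i) * w $ i = l * w $ i"
    using arg_cong[OF Dw, of "\<lambda>x. x $ i"] diag_mult_vec[OF D dD w i(1)] i w by simp
  thus ?thesis using i by auto
qed

lemma AQ2: "A * Q = Q * D"
proof -
  have "A * Q = Q * D * (Q\<^sup>T * Q)" unfolding AQ using Q D by (simp add: assoc_mult_mat[of _ n n _ n _ n])
  thus ?thesis unfolding QQ using Q D by simp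
qed

lemma colD: "i < n \<Longrightarrow> col D i = D $$ (i,i) \<cdot>\<^sub>v unit_vec n i"
  using D dD unfolding diagonal_mat_def by (intro eq_vecI) (auto simp: unit_vec_def)

lemma Qunit: "i < n \<Longrightarrow> Q *\<^sub>v unit_vec n i = col Q i"
  using col_mult2[of Q n n "1\<^sub>m n" n i] Q by simp

lemma diag_eig: assumes i: "i < n" shows "eigenvector A (col Q i) (D $$ (i,i))"
proof -
  have "A *\<^sub>v col Q i = col (A * Q) i" using col_mult2[of A n n Q n i] A Q i by simp
  also have "\<dots> = Q *\<^sub>v col D i" unfolding AQ2 using col_mult2[of Q n n D n i] D Q i by simp
  also have "\<dots> = D $$ (i,i) \<cdot>\<^sub>v col Q i" unfolding colD[OF i] using Q i
    by (simp add: mult_mat_vec Qunit)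
  finally have ev: "A *\<^sub>v col Q i = D $$ (i,i) \<cdot>\<^sub>v col Q i" .
  have "Q\<^sup>T *\<^sub>v col Q i = unit_vec n i" using col_mult2[of "Q\<^sup>T" n n Q n i] QQ Q i by simp
  hence nz: "col Q i \<noteq> 0\<^sub>v n"
  proof (intro notI)
    assume u: "Q\<^sup>T *\<^sub>v col Q i = unit_vec n i" and c: "col Q i = 0\<^sub>v n"
    have "Q\<^sup>T *\<^sub>v col Q i = 0\<^sub>v n" unfolding c using QT by (intro eq_vecI) auto
    hence "unit_vec n i $ i = (0::real)" using u i by simp
    thus False using i by simp
  qed
  have cQ: "col Q i \<in> carrier_vec n" using Q i by (simp add: col_def)
  show ?thesis unfolding eigenvector_def carrier_matD(1)[OF A] using cQ nz ev by blast
qed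

lemma qf: assumes v: "v \<in> carrier_vec n"
  shows "v \<bullet> (A *\<^sub>v v) = (\<Sum>i<n. D $$ (i,i) * ((Q\<^sup>T *\<^sub>v v) $ i)^2)"
proof -
  define w where "w = Q\<^sup>T *\<^sub>v v"
  have w: "w \<in> carrier_vec n" unfolding w_def using mult_mat_vec_carrier[OF QT v] .
  have "v \<bullet> (A *\<^sub>v v) = v \<bullet> (Q *\<^sub>v (D *\<^sub>v w))" unfolding Av[OF v] w_def ..
  also have "\<dots> = w \<bullet> (D *\<^sub>v w)" unfolding w_def
    using transpose_vec_mult_scalar[OF Q mult_mat_vec_carrier[OF D w] v] unfolding w_def by simp
  also have "\<dots> = (\<Sum>i<n. D $$ (i,i) * (w $ i)^2)"
    unfolding scalar_prod_def using w D diag_mult_vec[OF D dD w]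
    by (intro sum.cong) (auto simp: power2_eq_square lessThan_atLeast0)
  finally show ?thesis unfolding w_def .
qed

end

lemma diag_mult_mat:
  fixes D :: "real mat"
  assumes D: "D \<in> carrier_mat n n" and dD: "diagonal_mat D" and B: "B \<in> carrier_mat n m"
    and i: "i < n" and j: "j < m"
  shows "(D * B) $$ (i,j) = D $$ (i,i) * B $$ (i,j)"
proof -
  have "(D * B) $$ (i,j) = (D *\<^sub>v col B j) $ i" using D B i j by simp
  also have "\<dots> = D $$ (i,i) * col B j $ i" using diag_mult_vec[OF D dD _ i, of "col B j"] B j
    by (simp add: col_def)
  finally show ?thesis using B i j by simp
qed

lemma sym_eig_min:
  fixes A :: "real mat"
  assumes A: "A \<in> carrier_mat n n" and sym: "A\<^sup>T = A" and n: "n > 0"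
  shows "eigenvalue A (min_eigenvalue A)" "\<And>l. eigenvalue A l \<Longrightarrow> min_eigenvalue A \<le> l"
proof -
  obtain Q D where "Q \<in> carrier_mat n n \<and> D \<in> carrier_mat n n \<and> diagonal_mat D \<and>
     Q\<^sup>T * Q = 1\<^sub>m n \<and> Q * Q\<^sup>T = 1\<^sub>m n \<and> A = Q * D * Q\<^sup>T" using spectral_thm[OF A sym] by blast
  then interpret s: sdec A Q D n using A by unfold_locales auto
  have fin: "finite {l. eigenvalue A l}"
    by (rule finite_subset[of _ "(\<lambda>i. D $$ (i,i)) ` {..<n}"]) (auto dest: s.eig_diag)
  have ne: "{l. eigenvalue A l} \<noteq> {}" using s.diag_eig[OF n] unfolding eigenvalue_def by blast
  show "eigenvalue A (min_eigenvalue A)" unfolding min_eigenvalue_def using Min_in[OF fin ne] by simp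
  show "\<And>l. eigenvalue A l \<Longrightarrow> min_eigenvalue A \<le> l" unfolding min_eigenvalue_def
    using Min_le[OF fin] by simp
qed

lemma sym_min_pos_pd:
  fixes A :: "real mat"
  assumes A: "A \<in> carrier_mat n n" and sym: "A\<^sup>T = A" and n: "n > 0" and pos: "min_eigenvalue A > 0"
    and v: "v \<in> carrier_vec n" "v \<noteq> 0\<^sub>v n"
  shows "v \<bullet> (A *\<^sub>v v) > 0"
proof -
  obtain Q D where "Q \<in> carrier_mat n n \<and> D \<in> carrier_mat n n \<and> diagonal_mat D \<and>
     Q\<^sup>T * Q = 1\<^sub>m n \<and> Q * Q\<^sup>T = 1\<^sub>m n \<and> A = Q * D * Q\<^sup>T" using spectral_thm[OF A sym] by blast
  then interpret s: sdec A Q D n using A by unfold_locales auto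
  have Dpos: "D $$ (i,i) > 0" if "i < n" for i
    using sym_eig_min(2)[OF A sym n, of "D $$ (i,i)"] s.diag_eig[OF that] pos unfolding eigenvalue_def by force
  define w where "w = Q\<^sup>T *\<^sub>v v"
  have w: "w \<in> carrier_vec n" unfolding w_def using mult_mat_vec_carrier[OF s.QT v(1)] .
  have w0: "w \<noteq> 0\<^sub>v n" unfolding w_def using s.QT0[OF v] .
  obtain i where i: "i < n" "w $ i \<noteq> 0" using w w0 by (metis eq_vecI carrier_vecD index_zero_vec)
  have "0 < (\<Sum>i<n. D $$ (i,i) * (w $ i)^2)"
  proof (rule sum_pos2[of _ i])
    show "0 < D $$ (i,i) * (w $ i)^2" using Dpos[OF i(1)] i(2) by simp
    show "\<And>j. j \<in> {..<n} \<Longrightarrow> 0 \<le> D $$ (j,j) * (w $ j)^2"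
      using Dpos by (simp add: less_imp_le)
  qed (use i in auto)
  thus ?thesis unfolding s.qf[OF v(1)] w_def .
qed

lemma sym_inv:
  fixes A :: "real mat"
  assumes A: "A \<in> carrier_mat n n" and sym: "A\<^sup>T = A"
    and nz: "\<And>v. v \<in> carrier_vec n \<Longrightarrow> v \<noteq> 0\<^sub>v n \<Longrightarrow> A *\<^sub>v v \<noteq> 0\<^sub>v n"
  shows "inv_of A \<in> carrier_mat n n" "A * inv_of A = 1\<^sub>m n" "inv_of A * A = 1\<^sub>m n" "(inv_of A)\<^sup>T = inv_of A"
proof -
  obtain Q D where "Q \<in> carrier_mat n n \<and> D \<in> carrier_mat n n \<and> diagonal_mat D \<and>
     Q\<^sup>T * Q = 1\<^sub>m n \<and> Q * Q\<^sup>T = 1\<^sub>m n \<and> A = Q * D * Q\<^sup>T" using spectral_thm[OF A sym] by blast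
  then interpret s: sdec A Q D n using A by unfold_locales auto
  have Dnz: "D $$ (i,i) \<noteq> 0" if "i < n" for i
  proof
    assume "D $$ (i,i) = 0"
    moreover have ev: "col Q i \<in> carrier_vec n" "col Q i \<noteq> 0\<^sub>v n" "A *\<^sub>v col Q i = D $$ (i,i) \<cdot>\<^sub>v col Q i"
      using s.diag_eig[OF that] unfolding eigenvector_def carrier_matD(1)[OF A] by blast+
    moreover have "0 \<cdot>\<^sub>v col Q i = 0\<^sub>v n" using ev(1) s.Q by (intro eq_vecI) auto
    ultimately show False using nz[OF ev(1,2)] by simp
  qed
  define Di where "Di = mat n n (\<lambda>(i,j). if i = j then 1 / D $$ (i,i) else 0)"
  have Di: "Di \<in> carrier_mat n n" unfolding Di_def by simp
  have dDi: "diagonal_mat Di" unfolding Di_def diagonal_mat_def by simp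
  have DDi: "D * Di = 1\<^sub>m n"
  proof (rule eq_matI)
    fix i j assume ij: "i < dim_row (1\<^sub>m n :: real mat)" "j < dim_col (1\<^sub>m n :: real mat)"
    show "(D * Di) $$ (i,j) = 1\<^sub>m n $$ (i,j)"
      using diag_mult_mat[OF s.D s.dD Di, of i j] ij Dnz[of i] Dnz[of j] by (simp add: Di_def)
  qed (use s.D Di in auto)
  define B where "B = Q * Di * Q\<^sup>T"
  have B: "B \<in> carrier_mat n n" unfolding B_def using s.Q Di by simp
  have "A * B = Q * (D * (Q\<^sup>T * Q) * Di) * Q\<^sup>T" unfolding s.AQ B_def using s.Q s.D Di
    by (simp add: assoc_mult_mat[of _ n n _ n _ n])
  hence AB: "A * B = 1\<^sub>m n" unfolding s.QQ using s.Q s.D Di s.QQ2 DDi by simp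
  have BA: "B * A = 1\<^sub>m n" using mat_mult_left_right_inverse[OF A B AB] .
  have uniq: "M = B" if "M \<in> carrier_mat n n" "A * M = 1\<^sub>m n" "M * A = 1\<^sub>m n" for M
  proof -
    have "M = M * (A * B)" unfolding AB using that by simp
    also have "\<dots> = (M * A) * B" using that A B by (intro assoc_mult_mat[symmetric]) auto
    finally show ?thesis unfolding that(3) using B by simp
  qed
  have inv: "inv_of A = B" unfolding inv_of_def carrier_matD(1)[OF A]
    by (rule the_equality) (use B AB BA uniq in blast)+
  show "inv_of A \<in> carrier_mat n n" "A * inv_of A = 1\<^sub>m n" "inv_of A * A = 1\<^sub>m n" unfolding inv using B AB BA by auto
  have DiT: "Di\<^sup>T = Di" unfolding Di_def by (rule eq_matI) auto
  have "B\<^sup>T = (Q\<^sup>T)\<^sup>T * (Q * Di)\<^sup>T" unfolding B_def by (rule transpose_mult[of _ n n]) (use s.Q Di in auto)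
  also have "(Q * Di)\<^sup>T = Di\<^sup>T * Q\<^sup>T" by (rule transpose_mult[of _ n n]) (use s.Q Di in auto)
  finally have "B\<^sup>T = Q * (Di * Q\<^sup>T)" unfolding DiT by simp
  also have "\<dots> = B" unfolding B_def using s.Q Di by (intro assoc_mult_mat[symmetric]) auto
  finally show "(inv_of A)\<^sup>T = inv_of A" unfolding inv .
qed

lemma self_scalar_pos:
  fixes v :: "real vec"
  assumes v: "v \<in> carrier_vec n" "v \<noteq> 0\<^sub>v n"
  shows "v \<bullet> v > 0"
proof -
  obtain i where i: "i < n" "v $ i \<noteq> 0" using v by (metis eq_vecI carrier_vecD index_zero_vec)
  have "v $ i * v $ i \<le> (\<Sum>j\<in>{0..<n}. v $ j * v $ j)"
    using i by (intro member_le_sum) auto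
  thus ?thesis using v(1) i(2) unfolding scalar_prod_def
    by (smt (verit) carrier_vecD not_real_square_gt_zero)
qed

lemma conj_sym:
  fixes Q X :: "real mat"
  assumes Q: "Q \<in> carrier_mat n n" and X: "X \<in> carrier_mat n n" and sym: "X\<^sup>T = X"
  shows "(Q * X * Q\<^sup>T)\<^sup>T = Q * X * Q\<^sup>T"
proof -
  have "(Q * X * Q\<^sup>T)\<^sup>T = (Q\<^sup>T)\<^sup>T * (Q * X)\<^sup>T" by (rule transpose_mult[of _ n n]) (use Q X in auto)
  also have "(Q * X)\<^sup>T = X\<^sup>T * Q\<^sup>T" by (rule transpose_mult[of _ n n]) (use Q X in auto)
  finally have "(Q * X * Q\<^sup>T)\<^sup>T = Q * (X * Q\<^sup>T)" unfolding sym by simp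
  also have "\<dots> = Q * X * Q\<^sup>T" using Q X by (intro assoc_mult_mat[symmetric]) auto
  finally show ?thesis .
qed

lemma sqrt_unique:
  fixes S T :: "real mat"
  assumes S: "S \<in> carrier_mat n n" and T: "T \<in> carrier_mat n n"
    and sS: "S\<^sup>T = S" and sT: "T\<^sup>T = T"
    and pS: "\<And>v. v \<in> carrier_vec n \<Longrightarrow> v \<noteq> 0\<^sub>v n \<Longrightarrow> v \<bullet> (S *\<^sub>v v) > 0"
    and pT: "\<And>v. v \<in> carrier_vec n \<Longrightarrow> v \<noteq> 0\<^sub>v n \<Longrightarrow> v \<bullet> (T *\<^sub>v v) > 0"
    and eq: "S * S = T * T"
  shows "S = T"
proof -
  define M where "M = S - T"
  have M: "M \<in> carrier_mat n n" unfolding M_def using minus_carrier_mat[OF T] .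
  have sM: "M\<^sup>T = M" unfolding M_def
  proof (rule eq_matI)
    fix i j assume ij: "i < dim_row (S - T)" "j < dim_col (S - T)"
    have "S $$ (j,i) = S $$ (i,j)" "T $$ (j,i) = T $$ (i,j)" using ij S T sS sT
      by (metis carrier_matD index_transpose_mat(1) index_minus_mat(2,3))+
    thus "(S - T)\<^sup>T $$ (i,j) = (S - T) $$ (i,j)" using ij S T by simp
  qed (use S T in auto)
  obtain Q D where "Q \<in> carrier_mat n n \<and> D \<in> carrier_mat n n \<and> diagonal_mat D \<and>
     Q\<^sup>T * Q = 1\<^sub>m n \<and> Q * Q\<^sup>T = 1\<^sub>m n \<and> M = Q * D * Q\<^sup>T" using spectral_thm[OF M sM] by blast
  then interpret s: sdec M Q D n using M by unfold_locales auto
  have D0: "D $$ (i,i) = 0" if i: "i < n" for i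
  proof -
    define v where "v = col Q i"
    define \<mu> where "\<mu> = D $$ (i,i)"
    have v: "v \<in> carrier_vec n" "v \<noteq> 0\<^sub>v n" "M *\<^sub>v v = \<mu> \<cdot>\<^sub>v v"
      using s.diag_eig[OF i] unfolding eigenvector_def carrier_matD(1)[OF M] v_def \<mu>_def by blast+
    define a where "a = S *\<^sub>v v"
    define b where "b = T *\<^sub>v v"
    have a: "a \<in> carrier_vec n" unfolding a_def using mult_mat_vec_carrier[OF S v(1)] .
    have b: "b \<in> carrier_vec n" unfolding b_def using mult_mat_vec_carrier[OF T v(1)] .
    have Mv: "M *\<^sub>v v = a - b" unfolding M_def a_def b_def using S T v(1) by (simp add: minus_mult_distrib_mat_vec)
    have Sx: "v \<bullet> (S *\<^sub>v x) = a \<bullet> x" if "x \<in> carrier_vec n" for x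
      using transpose_vec_mult_scalar[OF S that v(1)] sS unfolding a_def by simp
    have Tx: "v \<bullet> (T *\<^sub>v x) = b \<bullet> x" if "x \<in> carrier_vec n" for x
      using transpose_vec_mult_scalar[OF T that v(1)] sT unfolding b_def by simp
    have aa: "a \<bullet> a = v \<bullet> ((S * S) *\<^sub>v v)" using Sx[OF a] S v(1) unfolding a_def
      by (simp add: assoc_mult_mat_vec[of _ n n _ n])
    have bb: "b \<bullet> b = v \<bullet> ((T * T) *\<^sub>v v)" using Tx[OF b] T v(1) unfolding b_def
      by (simp add: assoc_mult_mat_vec[of _ n n _ n])
    have "v \<bullet> (S *\<^sub>v (M *\<^sub>v v)) + v \<bullet> (T *\<^sub>v (M *\<^sub>v v)) = a \<bullet> (a - b) + b \<bullet> (a - b)"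
      unfolding Mv using Sx Tx a b by simp
    also have "\<dots> = a \<bullet> a - b \<bullet> b" using a b comm_scalar_prod[OF a b]
      by (simp add: scalar_prod_minus_distrib)
    also have "\<dots> = 0" unfolding aa bb eq by simp
    finally have z: "v \<bullet> (S *\<^sub>v (M *\<^sub>v v)) + v \<bullet> (T *\<^sub>v (M *\<^sub>v v)) = 0" .
    have "v \<bullet> (S *\<^sub>v (M *\<^sub>v v)) + v \<bullet> (T *\<^sub>v (M *\<^sub>v v)) = \<mu> * (v \<bullet> (S *\<^sub>v v) + v \<bullet> (T *\<^sub>v v))"
      unfolding v(3) using S T v(1) by (simp add: mult_mat_vec algebra_simps)
    hence "\<mu> * (v \<bullet> (S *\<^sub>v v) + v \<bullet> (T *\<^sub>v v)) = 0" using z by simp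
    moreover have "v \<bullet> (S *\<^sub>v v) + v \<bullet> (T *\<^sub>v v) > 0" using pS[OF v(1,2)] pT[OF v(1,2)] by simp
    ultimately show ?thesis unfolding \<mu>_def by simp
  qed
  have "D = 0\<^sub>m n n" by (rule eq_matI) (use s.D s.dD D0 in \<open>auto simp: diagonal_mat_def\<close>)
  hence "M = 0\<^sub>m n n" unfolding s.AQ using s.Q by simp
  show "S = T"
  proof (rule eq_matI)
    fix i j assume "i < dim_row T" "j < dim_col T"
    thus "S $$ (i,j) = T $$ (i,j)" using arg_cong[OF \<open>M = 0\<^sub>m n n\<close>, of "\<lambda>X. X $$ (i,j)"] S T
      unfolding M_def by simp
  qed (use S T in auto)
qed


lemma sqrt_pd_props:
  fixes A :: "real mat"
  assumes pd: "pos_def_mat A" and A: "A \<in> carrier_mat n n"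
  shows "sqrt_pd A \<in> carrier_mat n n" "(sqrt_pd A)\<^sup>T = sqrt_pd A" "sqrt_pd A * sqrt_pd A = A"
proof -
  have dA: "dim_row A = n" using A by simp
  have sym: "A\<^sup>T = A" using pd unfolding pos_def_mat_def sym_mat_def by simp
  have pA: "v \<bullet> (A *\<^sub>v v) > 0" if "v \<in> carrier_vec n" "v \<noteq> 0\<^sub>v n" for v
    using pd that unfolding pos_def_mat_def dA by blast
  obtain Q D where "Q \<in> carrier_mat n n \<and> D \<in> carrier_mat n n \<and> diagonal_mat D \<and>
     Q\<^sup>T * Q = 1\<^sub>m n \<and> Q * Q\<^sup>T = 1\<^sub>m n \<and> A = Q * D * Q\<^sup>T" using spectral_thm[OF A sym] by blast
  then interpret s: sdec A Q D n using A by unfold_locales auto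
  have Dpos: "D $$ (i,i) > 0" if i: "i < n" for i
  proof -
    have v: "col Q i \<in> carrier_vec n" "col Q i \<noteq> 0\<^sub>v n" "A *\<^sub>v col Q i = D $$ (i,i) \<cdot>\<^sub>v col Q i"
      using s.diag_eig[OF i] unfolding eigenvector_def dA by blast+
    have "0 < col Q i \<bullet> (A *\<^sub>v col Q i)" using pA[OF v(1,2)] .
    also have "\<dots> = D $$ (i,i) * (col Q i \<bullet> col Q i)" unfolding v(3) using v(1) by simp
    finally show ?thesis using self_scalar_pos[OF v(1,2)] by (simp add: zero_less_mult_iff)
  qed
  define Dh where "Dh = mat n n (\<lambda>(i,j). if i = j then sqrt (D $$ (i,i)) else 0)"
  have Dh: "Dh \<in> carrier_mat n n" unfolding Dh_def by simp
  have dDh: "diagonal_mat Dh" unfolding Dh_def diagonal_mat_def by simp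
  have DhT: "Dh\<^sup>T = Dh" unfolding Dh_def by (rule eq_matI) auto
  have DhDh: "Dh * Dh = D"
  proof (rule eq_matI)
    fix i j assume ij: "i < dim_row D" "j < dim_col D"
    show "(Dh * Dh) $$ (i,j) = D $$ (i,j)"
      using diag_mult_mat[OF Dh dDh Dh, of i j] ij s.D s.dD Dpos[of i] unfolding diagonal_mat_def
      by (auto simp: Dh_def)
  qed (use Dh s.D in auto)
  define S where "S = Q * Dh * Q\<^sup>T"
  have S: "S \<in> carrier_mat n n" unfolding S_def using s.Q Dh by simp
  have sS: "S\<^sup>T = S" unfolding S_def by (rule conj_sym[OF s.Q Dh DhT])
  interpret t: sdec S Q Dh n using S s.Q Dh dDh s.QQ s.QQ2 S_def by unfold_locales auto
  have pS: "v \<bullet> (S *\<^sub>v v) > 0" if v: "v \<in> carrier_vec n" "v \<noteq> 0\<^sub>v n" for v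
  proof -
    define w where "w = Q\<^sup>T *\<^sub>v v"
    have w: "w \<in> carrier_vec n" unfolding w_def using mult_mat_vec_carrier[OF s.QT v(1)] .
    have w0: "w \<noteq> 0\<^sub>v n" unfolding w_def using s.QT0[OF v] .
    obtain i where i: "i < n" "w $ i \<noteq> 0" using w w0 by (metis eq_vecI carrier_vecD index_zero_vec)
    have Dhii: "Dh $$ (j,j) > 0" if "j < n" for j using Dpos[OF that] that unfolding Dh_def by simp
    have "0 < (\<Sum>i<n. Dh $$ (i,i) * (w $ i)^2)"
    proof (rule sum_pos2[of _ i])
      show "0 < Dh $$ (i,i) * (w $ i)^2" using Dhii[OF i(1)] i(2) by simp
      show "\<And>j. j \<in> {..<n} \<Longrightarrow> 0 \<le> Dh $$ (j,j) * (w $ j)^2"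
        using Dhii by (simp add: less_imp_le)
    qed (use i in auto)
    thus ?thesis unfolding t.qf[OF v(1)] w_def .
  qed
  have SS: "S * S = A"
  proof -
    have "S * S = Q * (Dh * (Q\<^sup>T * Q) * Dh) * Q\<^sup>T" unfolding S_def using s.Q Dh
      by (simp add: assoc_mult_mat[of _ n n _ n _ n])
    also have "\<dots> = Q * D * Q\<^sup>T" unfolding s.QQ using Dh DhDh by simp
    finally show ?thesis using s.AQ by simp
  qed
  have pdS: "pos_def_mat S" unfolding pos_def_mat_def sym_mat_def using S sS pS by auto
  have "sqrt_pd A = S" unfolding sqrt_pd_def dA
  proof (rule the_equality)
    show "S \<in> carrier_mat n n \<and> pos_def_mat S \<and> S * S = A" using S pdS SS by blast
    fix S' assume S': "S' \<in> carrier_mat n n \<and> pos_def_mat S' \<and> S' * S' = A"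
    have dS': "dim_row S' = n" using S' carrier_matD(1)[of S' n n] by blast
    show "S' = S"
    proof (rule sqrt_unique[of S' n S])
      show "S'\<^sup>T = S'" using S' unfolding pos_def_mat_def sym_mat_def by simp
      show "\<And>v. v \<in> carrier_vec n \<Longrightarrow> v \<noteq> 0\<^sub>v n \<Longrightarrow> v \<bullet> (S' *\<^sub>v v) > 0"
        using S' unfolding pos_def_mat_def dS' by blast
    qed (use S' S sS pS SS in auto)
  qed
  thus "sqrt_pd A \<in> carrier_mat n n" "(sqrt_pd A)\<^sup>T = sqrt_pd A" "sqrt_pd A * sqrt_pd A = A"
    using S sS SS by auto
qed



lemma bil_sym:
  fixes A :: "real mat"
  assumes A: "A \<in> carrier_mat n n" and s: "A\<^sup>T = A" and x: "x \<in> carrier_vec n" and y: "y \<in> carrier_vec n"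
  shows "x \<bullet> (A *\<^sub>v y) = y \<bullet> (A *\<^sub>v x)"
  using transpose_vec_mult_scalar[OF A y x] s comm_scalar_prod[OF mult_mat_vec_carrier[OF A x] y] by simp

lemma qf_add:
  fixes A :: "real mat"
  assumes A: "A \<in> carrier_mat n n" and s: "A\<^sup>T = A" and x: "x \<in> carrier_vec n" and y: "y \<in> carrier_vec n"
  shows "(x + y) \<bullet> (A *\<^sub>v (x + y)) = x \<bullet> (A *\<^sub>v x) + 2 * (x \<bullet> (A *\<^sub>v y)) + y \<bullet> (A *\<^sub>v y)"
proof -
  have Ax: "A *\<^sub>v x \<in> carrier_vec n" "A *\<^sub>v y \<in> carrier_vec n"
    using mult_mat_vec_carrier[OF A x] mult_mat_vec_carrier[OF A y] by auto
  have "(x + y) \<bullet> (A *\<^sub>v (x + y)) = (x + y) \<bullet> (A *\<^sub>v x + A *\<^sub>v y)"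
    using mult_add_distrib_mat_vec[OF A x y] by simp
  also have "\<dots> = x \<bullet> (A *\<^sub>v x) + x \<bullet> (A *\<^sub>v y) + (y \<bullet> (A *\<^sub>v x) + y \<bullet> (A *\<^sub>v y))"
    using x y Ax by (simp add: add_scalar_prod_distrib[of _ n] scalar_prod_add_distrib[of _ n])
  finally show ?thesis using bil_sym[OF A s x y] by simp
qed

lemma bil_smult:
  fixes A :: "real mat"
  assumes A: "A \<in> carrier_mat n n" and x: "x \<in> carrier_vec n" and y: "y \<in> carrier_vec n"
  shows "x \<bullet> (A *\<^sub>v (t \<cdot>\<^sub>v y)) = t * (x \<bullet> (A *\<^sub>v y))"
    "(t \<cdot>\<^sub>v x) \<bullet> (A *\<^sub>v y) = t * (x \<bullet> (A *\<^sub>v y))"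
  using mult_mat_vec[OF A y] mult_mat_vec_carrier[OF A y] x by (auto simp: scalar_prod_smult_distrib[of _ n])

locale core =
  fixes m :: nat and S :: "real mat" and a \<beta> :: real and b :: "real vec"
  assumes Sc: "S \<in> carrier_mat (Suc m) (Suc m)" and pd: "pos_def_mat S" and beta: "\<beta> > 0"
    and bc: "b \<in> carrier_vec m" and m1: "m \<ge> 1"
begin

definition "s11 = S $$ (0,0)"
definition "s12 = vec m (\<lambda>j. S $$ (Suc j, 0))"
definition "S22 = mat m m (\<lambda>(i,j). S $$ (Suc i, Suc j))"
definition "Fm = \<beta>\<^sup>2 \<cdot>\<^sub>m S22 - mat m m (\<lambda>(i,j). b $ i * b $ j)"
definition "p = a \<cdot>\<^sub>v b - \<beta>\<^sup>2 \<cdot>\<^sub>v s12"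
definition "Qs y = y \<bullet> (S *\<^sub>v y)"
definition "Qf u = Qs (vCons 1 u)"
definition "q u = (a + b \<bullet> u)\<^sup>2 - \<beta>\<^sup>2 * Qf u"

lemma symS: "S\<^sup>T = S" using pd unfolding pos_def_mat_def sym_mat_def by simp
lemma symE: "i < Suc m \<Longrightarrow> j < Suc m \<Longrightarrow> S $$ (i,j) = S $$ (j,i)"
  using symS Sc by (metis carrier_matD index_transpose_mat(1))
lemma posS: "v \<in> carrier_vec (Suc m) \<Longrightarrow> v \<noteq> 0\<^sub>v (Suc m) \<Longrightarrow> Qs v > 0"
  using pd Sc unfolding pos_def_mat_def Qs_def by (metis carrier_matD(1))

lemma s12c: "s12 \<in> carrier_vec m" unfolding s12_def by simp
lemma S22c: "S22 \<in> carrier_mat m m" unfolding S22_def by simp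
lemma symS22: "S22\<^sup>T = S22" unfolding S22_def by (rule eq_matI) (auto simp: symE)
lemma Fc: "Fm \<in> carrier_mat m m" unfolding Fm_def by (rule minus_carrier_mat) simp
lemma pc: "p \<in> carrier_vec m" unfolding p_def using bc s12c by simp

lemma S_vCons: assumes u: "u \<in> carrier_vec m"
  shows "S *\<^sub>v vCons c u = vCons (c * s11 + s12 \<bullet> u) (c \<cdot>\<^sub>v s12 + S22 *\<^sub>v u)"
proof (rule eq_vecI)
  fix i assume "i < dim_vec (vCons (c * s11 + s12 \<bullet> u) (c \<cdot>\<^sub>v s12 + S22 *\<^sub>v u))"
  hence i: "i < Suc m" using s12c S22c by simp
  have row: "row S i = vCons (S $$ (i,0)) (vec m (\<lambda>k. S $$ (i, Suc k)))"
    by (rule eq_vecI) (use Sc i in \<open>auto simp: vec_index_vCons\<close>)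
  have "(S *\<^sub>v vCons c u) $ i = S $$ (i,0) * c + vec m (\<lambda>k. S $$ (i, Suc k)) \<bullet> u"
    using Sc i by (simp add: row scalar_prod_vCons)
  also have "\<dots> = vCons (c * s11 + s12 \<bullet> u) (c \<cdot>\<^sub>v s12 + S22 *\<^sub>v u) $ i"
  proof (cases i)
    case 0
    have "vec m (\<lambda>k. S $$ (0, Suc k)) = s12" unfolding s12_def
      by (rule eq_vecI) (auto simp: symE)
    thus ?thesis using 0 by (simp add: s11_def)
  next
    case (Suc i')
    have i': "i' < m" using i Suc by simp
    have "vec m (\<lambda>k. S $$ (i, Suc k)) \<bullet> u = (S22 *\<^sub>v u) $ i'"
    proof -
      have "vec m (\<lambda>k. S $$ (i, Suc k)) = row S22 i'"
        by (rule eq_vecI) (use i' Suc in \<open>auto simp: S22_def\<close>)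
      thus ?thesis using i' S22c by simp
    qed
    thus ?thesis using Suc i' s12c S22c u by (simp add: s12_def)
  qed
  finally show "(S *\<^sub>v vCons c u) $ i = vCons (c * s11 + s12 \<bullet> u) (c \<cdot>\<^sub>v s12 + S22 *\<^sub>v u) $ i" .
qed (use Sc s12c S22c in simp)

lemma Qs_vCons: assumes u: "u \<in> carrier_vec m"
  shows "Qs (vCons c u) = c\<^sup>2 * s11 + 2 * c * (s12 \<bullet> u) + u \<bullet> (S22 *\<^sub>v u)"
proof -
  have "Qs (vCons c u) = c * (c * s11 + s12 \<bullet> u) + u \<bullet> (c \<cdot>\<^sub>v s12 + S22 *\<^sub>v u)"
    unfolding Qs_def S_vCons[OF u] by (simp add: scalar_prod_vCons)
  also have "u \<bullet> (c \<cdot>\<^sub>v s12 + S22 *\<^sub>v u) = c * (s12 \<bullet> u) + u \<bullet> (S22 *\<^sub>v u)"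
    using u s12c mult_mat_vec_carrier[OF S22c u] comm_scalar_prod[OF u s12c]
    by (simp add: scalar_prod_add_distrib[of _ m] scalar_prod_smult_distrib[of _ m])
  finally show ?thesis by (simp add: power2_eq_square algebra_simps)
qed

lemma Qf_expand: "u \<in> carrier_vec m \<Longrightarrow> Qf u = s11 + 2 * (s12 \<bullet> u) + u \<bullet> (S22 *\<^sub>v u)"
  unfolding Qf_def by (simp add: Qs_vCons)

lemma vCons0: "vCons c (u :: real vec) = 0\<^sub>v (Suc m) \<longleftrightarrow> c = 0 \<and> u = 0\<^sub>v m"
proof -
  have z: "0\<^sub>v (Suc m) = vCons (0::real) (0\<^sub>v m)" by (rule eq_vecI) (auto simp: vec_index_vCons)
  show ?thesis unfolding z vCons_eq_vCons by simp
qed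

lemma vc: "u \<in> carrier_vec m \<Longrightarrow> vCons c u \<in> carrier_vec (Suc m)" by simp

lemma S22_pos: assumes u: "u \<in> carrier_vec m" "u \<noteq> 0\<^sub>v m" shows "u \<bullet> (S22 *\<^sub>v u) > 0"
  using posS[OF vc[OF u(1)], of 0] vCons0[of 0 u] u Qs_vCons[OF u(1), of 0] by simp

lemma Qs_pos1: "u \<in> carrier_vec m \<Longrightarrow> Qf u > 0"
  unfolding Qf_def using posS[OF vc] vCons0 by simp

lemma F_mult: assumes x: "x \<in> carrier_vec m"
  shows "Fm *\<^sub>v x = \<beta>\<^sup>2 \<cdot>\<^sub>v (S22 *\<^sub>v x) - (b \<bullet> x) \<cdot>\<^sub>v b"
proof (rule eq_vecI)
  fix i assume "i < dim_vec (\<beta>\<^sup>2 \<cdot>\<^sub>v (S22 *\<^sub>v x) - (b \<bullet> x) \<cdot>\<^sub>v b)"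
  hence i: "i < m" using bc by simp
  have "(Fm *\<^sub>v x) $ i = (\<Sum>j = 0..<m. (\<beta>\<^sup>2 * S $$ (Suc i, Suc j) - b $ i * b $ j) * x $ j)"
    using i x Fc unfolding Fm_def S22_def by (simp add: mult_mat_vec_def scalar_prod_def)
  also have "\<dots> = \<beta>\<^sup>2 * (\<Sum>j = 0..<m. S $$ (Suc i, Suc j) * x $ j) - b $ i * (\<Sum>j = 0..<m. b $ j * x $ j)"
    by (simp add: algebra_simps sum_subtractf sum_distrib_left)
  also have "\<dots> = (\<beta>\<^sup>2 \<cdot>\<^sub>v (S22 *\<^sub>v x) - (b \<bullet> x) \<cdot>\<^sub>v b) $ i"
    using i x bc S22c unfolding S22_def by (simp add: mult_mat_vec_def scalar_prod_def)
  finally show "(Fm *\<^sub>v x) $ i = (\<beta>\<^sup>2 \<cdot>\<^sub>v (S22 *\<^sub>v x) - (b \<bullet> x) \<cdot>\<^sub>v b) $ i" .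
qed (use Fc bc in simp)

lemma F_bil: assumes d: "d \<in> carrier_vec m" and u: "u \<in> carrier_vec m"
  shows "d \<bullet> (Fm *\<^sub>v u) = \<beta>\<^sup>2 * (d \<bullet> (S22 *\<^sub>v u)) - (b \<bullet> d) * (b \<bullet> u)"
  unfolding F_mult[OF u] using d bc mult_mat_vec_carrier[OF S22c u] comm_scalar_prod[OF d bc]
  by (simp add: scalar_prod_minus_distrib[of _ m] scalar_prod_smult_distrib[of _ m])

lemma symF: "Fm\<^sup>T = Fm"
  by (rule eq_matI) (use Fc in \<open>auto simp: Fm_def S22_def symE\<close>)

lemma q_shift: assumes u: "u \<in> carrier_vec m" and d: "d \<in> carrier_vec m"
  shows "q (u + d) = q u - d \<bullet> (Fm *\<^sub>v d) + 2 * (d \<bullet> p - d \<bullet> (Fm *\<^sub>v u))"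
proof -
  have ud: "u + d \<in> carrier_vec m" using u d by simp
  have 1: "b \<bullet> (u + d) = b \<bullet> u + b \<bullet> d" using scalar_prod_add_distrib[OF bc u d] .
  have 2: "s12 \<bullet> (u + d) = s12 \<bullet> u + s12 \<bullet> d" using scalar_prod_add_distrib[OF s12c u d] .
  have 3: "(u + d) \<bullet> (S22 *\<^sub>v (u + d)) = u \<bullet> (S22 *\<^sub>v u) + 2 * (d \<bullet> (S22 *\<^sub>v u)) + d \<bullet> (S22 *\<^sub>v d)"
    using qf_add[OF S22c symS22 u d] bil_sym[OF S22c symS22 u d] by simp
  have 4: "d \<bullet> p = a * (b \<bullet> d) - \<beta>\<^sup>2 * (s12 \<bullet> d)" unfolding p_def
    using d bc s12c comm_scalar_prod[OF d bc] comm_scalar_prod[OF d s12c]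
    by (simp add: scalar_prod_minus_distrib[of _ m] scalar_prod_smult_distrib[of _ m])
  show ?thesis unfolding q_def Qf_expand[OF ud] Qf_expand[OF u] 1 2 3 4 F_bil[OF d d] F_bil[OF d u]
    by (simp add: power2_eq_square algebra_simps)
qed

lemma Qs_add: assumes x: "x \<in> carrier_vec (Suc m)" and y: "y \<in> carrier_vec (Suc m)"
  shows "Qs (x + t \<cdot>\<^sub>v y) = Qs x + 2 * t * (x \<bullet> (S *\<^sub>v y)) + t\<^sup>2 * Qs y"
  unfolding Qs_def using qf_add[OF Sc symS x smult_carrier_vec[THEN iffD2, OF y]]
    bil_smult[OF Sc x y] bil_smult[OF Sc smult_carrier_vec[THEN iffD2, OF y] y] bil_smult[OF Sc y y]
  by (simp add: power2_eq_square)

lemma S0: "S *\<^sub>v 0\<^sub>v (Suc m) = 0\<^sub>v (Suc m)" using Sc by (intro eq_vecI) auto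

lemma Qs0: "Qs (0\<^sub>v (Suc m)) = 0"
  unfolding Qs_def by (rule scalar_prod_left_zero[OF mult_mat_vec_carrier[OF Sc]]) simp

lemma Qs_nonneg: "x \<in> carrier_vec (Suc m) \<Longrightarrow> Qs x \<ge> 0"
  using posS[of x] Qs0 by (cases "x = 0\<^sub>v (Suc m)") auto

lemma CS_strict: assumes x: "x \<in> carrier_vec (Suc m)" and y: "y \<in> carrier_vec (Suc m)"
  and ind: "\<And>t. x + t \<cdot>\<^sub>v y \<noteq> 0\<^sub>v (Suc m)" and y0: "y \<noteq> 0\<^sub>v (Suc m)"
  shows "(x \<bullet> (S *\<^sub>v y))\<^sup>2 < Qs x * Qs y"
proof -
  have Qy: "Qs y > 0" using posS[OF y y0] .
  define t where "t = - (x \<bullet> (S *\<^sub>v y)) / Qs y"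
  have "0 < Qs (x + t \<cdot>\<^sub>v y)" using posS[OF _ ind[of t]] x y by simp
  also have "\<dots> = Qs x - (x \<bullet> (S *\<^sub>v y))\<^sup>2 / Qs y" unfolding Qs_add[OF x y] t_def using Qy
    by (simp add: power2_eq_square field_simps)
  finally show ?thesis using Qy by (simp add: field_simps)
qed

lemma CS: assumes x: "x \<in> carrier_vec (Suc m)" and y: "y \<in> carrier_vec (Suc m)"
  shows "(x \<bullet> (S *\<^sub>v y))\<^sup>2 \<le> Qs x * Qs y"
proof (cases "y = 0\<^sub>v (Suc m)")
  case True
  thus ?thesis using x Sc Qs0 scalar_prod_right_zero[OF x] S0 by (simp add: Qs_def)
next
  case False
  have Qy: "Qs y > 0" using posS[OF y False] .
  define t where "t = - (x \<bullet> (S *\<^sub>v y)) / Qs y"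
  have "0 \<le> Qs (x + t \<cdot>\<^sub>v y)" using Qs_nonneg x y by simp
  also have "\<dots> = Qs x - (x \<bullet> (S *\<^sub>v y))\<^sup>2 / Qs y" unfolding Qs_add[OF x y] t_def using Qy
    by (simp add: power2_eq_square field_simps)
  finally show ?thesis using Qy by (simp add: field_simps)
qed

definition "feas u \<longleftrightarrow> a + b \<bullet> u - \<beta> * sqrt (Qf u) \<ge> 0"

lemma feas_of: assumes "a + b \<bullet> u \<ge> 0" "q u \<ge> 0" "u \<in> carrier_vec m" shows "feas u"
proof -
  have Qf: "Qf u > 0" using Qs_pos1[OF assms(3)] .
  have "\<beta> * sqrt (Qf u) = sqrt ((\<beta>)\<^sup>2 * Qf u)" using beta by (simp add: real_sqrt_mult)
  also have "\<dots> \<le> sqrt ((a + b \<bullet> u)\<^sup>2)" using assms(2) unfolding q_def by (intro real_sqrt_le_mono) simp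
  also have "\<dots> = a + b \<bullet> u" using assms(1) by simp
  finally show ?thesis unfolding feas_def by simp
qed

lemma feas_D: assumes "feas u" "u \<in> carrier_vec m"
  shows "a + b \<bullet> u > 0" "q u \<ge> 0" "a + b \<bullet> u \<ge> \<beta> * sqrt (Qf u)"
proof -
  have Qf: "Qf u > 0" using Qs_pos1[OF assms(2)] .
  show ge: "a + b \<bullet> u \<ge> \<beta> * sqrt (Qf u)" using assms(1) unfolding feas_def by simp
  moreover have "\<beta> * sqrt (Qf u) > 0" using beta Qf by simp
  ultimately show "a + b \<bullet> u > 0" by simp
  have "(\<beta> * sqrt (Qf u))\<^sup>2 \<le> (a + b \<bullet> u)\<^sup>2" using ge beta Qf by (intro power_mono) auto
  thus "q u \<ge> 0" unfolding q_def using Qf by (simp add: power_mult_distrib)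
qed

lemma invS: "inv_of S \<in> carrier_mat (Suc m) (Suc m)" "S * inv_of S = 1\<^sub>m (Suc m)"
  "inv_of S * S = 1\<^sub>m (Suc m)" "(inv_of S)\<^sup>T = inv_of S"
proof -
  have nz: "S *\<^sub>v v \<noteq> 0\<^sub>v (Suc m)" if "v \<in> carrier_vec (Suc m)" "v \<noteq> 0\<^sub>v (Suc m)" for v
    using posS[OF that] scalar_prod_right_zero[OF that(1)] unfolding Qs_def by auto
  show "inv_of S \<in> carrier_mat (Suc m) (Suc m)" "S * inv_of S = 1\<^sub>m (Suc m)"
    "inv_of S * S = 1\<^sub>m (Suc m)" "(inv_of S)\<^sup>T = inv_of S" using sym_inv[OF Sc symS nz] by auto
qed

lemma invS22: "inv_of S22 \<in> carrier_mat m m" "S22 * inv_of S22 = 1\<^sub>m m"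
  "inv_of S22 * S22 = 1\<^sub>m m" "(inv_of S22)\<^sup>T = inv_of S22"
proof -
  have nz: "S22 *\<^sub>v v \<noteq> 0\<^sub>v m" if "v \<in> carrier_vec m" "v \<noteq> 0\<^sub>v m" for v
    using S22_pos[OF that] scalar_prod_right_zero[OF that(1)] by auto
  show "inv_of S22 \<in> carrier_mat m m" "S22 * inv_of S22 = 1\<^sub>m m"
    "inv_of S22 * S22 = 1\<^sub>m m" "(inv_of S22)\<^sup>T = inv_of S22" using sym_inv[OF S22c symS22 nz] by auto
qed

lemma F_pd: assumes "min_eigenvalue Fm > 0" "d \<in> carrier_vec m" "d \<noteq> 0\<^sub>v m"
  shows "d \<bullet> (Fm *\<^sub>v d) > 0"
  using sym_min_pos_pd[OF Fc symF _ assms] m1 by simp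

lemma invF: assumes "min_eigenvalue Fm > 0"
  shows "inv_of Fm \<in> carrier_mat m m" "Fm * inv_of Fm = 1\<^sub>m m"
proof -
  have nz: "Fm *\<^sub>v v \<noteq> 0\<^sub>v m" if "v \<in> carrier_vec m" "v \<noteq> 0\<^sub>v m" for v
    using F_pd[OF assms that] scalar_prod_right_zero[OF that(1)] by auto
  show "inv_of Fm \<in> carrier_mat m m" "Fm * inv_of Fm = 1\<^sub>m m" using sym_inv[OF Fc symF nz] by auto
qed

lemma inv_apply: fixes A B :: "real mat" assumes "A \<in> carrier_mat n n" "B \<in> carrier_mat n n" "A * B = 1\<^sub>m n" "v \<in> carrier_vec n"
  shows "A *\<^sub>v (B *\<^sub>v v) = v"
  using assms by (simp add: one_mult_mat_vec flip: assoc_mult_mat_vec[of _ n n _ n])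

lemma nec_main: assumes u: "u \<in> carrier_vec m" and f: "feas u"
  shows "vCons a b \<bullet> (inv_of S *\<^sub>v vCons a b) \<ge> \<beta>\<^sup>2"
proof -
  define w where "w = vCons a b"
  define y where "y = vCons 1 u"
  define z where "z = inv_of S *\<^sub>v w"
  have w: "w \<in> carrier_vec (Suc m)" unfolding w_def using bc by simp
  have y: "y \<in> carrier_vec (Suc m)" unfolding y_def using u by simp
  have z: "z \<in> carrier_vec (Suc m)" unfolding z_def using mult_mat_vec_carrier[OF invS(1) w] .
  have Sz: "S *\<^sub>v z = w" unfolding z_def using inv_apply[OF Sc invS(1,2) w] .
  have wy: "w \<bullet> y = a + b \<bullet> u" unfolding w_def y_def by (simp add: scalar_prod_vCons)
  have "w \<bullet> y = z \<bullet> (S *\<^sub>v y)" unfolding Sz[symmetric]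
    using transpose_vec_mult_scalar[OF Sc y z] symS by simp
  hence "(a + b \<bullet> u)\<^sup>2 \<le> Qs z * Qf u" using CS[OF z y] wy unfolding Qf_def y_def by simp
  also have "Qs z = w \<bullet> z" unfolding Qs_def Sz using comm_scalar_prod[OF z w] .
  finally have 1: "(a + b \<bullet> u)\<^sup>2 \<le> (w \<bullet> z) * Qf u" .
  have 2: "\<beta>\<^sup>2 * Qf u \<le> (a + b \<bullet> u)\<^sup>2" using feas_D(2)[OF f u] unfolding q_def by simp
  have "Qf u > 0" using Qs_pos1[OF u] .
  hence "\<beta>\<^sup>2 \<le> w \<bullet> z" using 1 2 by (metis mult_le_cancel_right_pos order.trans)
  thus ?thesis unfolding w_def z_def .
qed

lemma q_at_opt: assumes us: "us \<in> carrier_vec m" and Fus: "Fm *\<^sub>v us = p" and d: "d \<in> carrier_vec m"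
  shows "q (us + d) = q us - d \<bullet> (Fm *\<^sub>v d)"
  using q_shift[OF us d] unfolding Fus by simp

lemma F_qf_smult: "d \<in> carrier_vec m \<Longrightarrow> (t \<cdot>\<^sub>v d) \<bullet> (Fm *\<^sub>v (t \<cdot>\<^sub>v d)) = t\<^sup>2 * (d \<bullet> (Fm *\<^sub>v d))"
  using bil_smult[OF Fc smult_carrier_vec[THEN iffD2], of d d t t] bil_smult[OF Fc, of d d t]
  by (simp add: power2_eq_square)

lemma pos_nec: assumes lam: "min_eigenvalue Fm > 0" and u: "u \<in> carrier_vec m" and f: "feas u"
  shows "a + b \<bullet> (inv_of Fm *\<^sub>v p) \<ge> 0"
proof (rule ccontr)
  define us where "us = inv_of Fm *\<^sub>v p"
  have us: "us \<in> carrier_vec m" unfolding us_def using mult_mat_vec_carrier[OF invF(1)[OF lam] pc] .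
  have Fus: "Fm *\<^sub>v us = p" unfolding us_def using inv_apply[OF Fc invF[OF lam] pc] .
  define d where "d = u - us"
  have d: "d \<in> carrier_vec m" unfolding d_def using u us by simp
  have ud: "us + d = u" unfolding d_def using u us by (intro eq_vecI) auto
  have dFd: "d \<bullet> (Fm *\<^sub>v d) \<ge> 0"
  proof (cases "d = 0\<^sub>v m")
    case True thus ?thesis using scalar_prod_left_zero[OF mult_mat_vec_carrier[OF Fc d]] by simp
  next
    case False thus ?thesis using F_pd[OF lam d False] by simp
  qed
  have qu: "q u \<ge> 0" using feas_D(2)[OF f u] .
  have g1: "a + b \<bullet> u > 0" using feas_D(1)[OF f u] .
  assume "\<not> a + b \<bullet> (inv_of Fm *\<^sub>v p) \<ge> 0"
  hence g0: "a + b \<bullet> us < 0" unfolding us_def by simp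
  have bd: "b \<bullet> d = b \<bullet> u - b \<bullet> us" unfolding d_def using scalar_prod_minus_distrib[OF bc u us] .
  define t where "t = - (a + b \<bullet> us) / (b \<bullet> d)"
  have bdpos: "b \<bullet> d > 0" using g0 g1 bd by simp
  have t0: "t \<ge> 0" "t \<le> 1" unfolding t_def using g0 g1 bd bdpos by (auto simp: field_simps)
  define v where "v = us + t \<cdot>\<^sub>v d"
  have v: "v \<in> carrier_vec m" unfolding v_def using us d by simp
  have av: "a + b \<bullet> v = 0" unfolding v_def t_def using bdpos
    scalar_prod_add_distrib[OF bc us smult_carrier_vec[THEN iffD2, OF d]] scalar_prod_smult_distrib[OF bc d]
    by (simp add: field_simps)
  have "q v = q us - t\<^sup>2 * (d \<bullet> (Fm *\<^sub>v d))" unfolding v_def q_at_opt[OF us Fus smult_carrier_vec[THEN iffD2, OF d]]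
    F_qf_smult[OF d] ..
  also have "\<dots> \<ge> q us - d \<bullet> (Fm *\<^sub>v d)"
  proof -
    have "t\<^sup>2 \<le> 1" using t0 by (simp add: power_le_one)
    thus ?thesis using dFd by (simp add: mult_left_le_one_le mult_le_cancel_right1)
  qed
  also have "q us - d \<bullet> (Fm *\<^sub>v d) = q u" using q_at_opt[OF us Fus d] ud by simp
  finally have "q v \<ge> 0" using qu by simp
  moreover have "q v < 0" unfolding q_def av using Qs_pos1[OF v] beta by simp
  ultimately show False by simp
qed

lemma zero_d1: assumes lam: "min_eigenvalue Fm = 0"
  shows "\<exists>d1 \<in> carrier_vec m. S22 *\<^sub>v d1 = b \<and> b \<bullet> d1 = \<beta>\<^sup>2 \<and> d1 \<bullet> s12 = b \<bullet> (inv_of S22 *\<^sub>v s12)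
     \<and> d1 \<bullet> (Fm *\<^sub>v d1) = 0"
proof -
  have "eigenvalue Fm 0" using sym_eig_min(1)[OF Fc symF] m1 lam by simp
  then obtain d0 where "eigenvector Fm d0 0" unfolding eigenvalue_def by blast
  hence d0: "d0 \<in> carrier_vec m" "d0 \<noteq> 0\<^sub>v m" "Fm *\<^sub>v d0 = 0 \<cdot>\<^sub>v d0"
    unfolding eigenvector_def carrier_matD(1)[OF Fc] by blast+
  have Fd0: "Fm *\<^sub>v d0 = 0\<^sub>v m" using d0 by (intro eq_vecI) auto
  have "d0 \<bullet> (Fm *\<^sub>v d0) = 0" unfolding Fd0 using scalar_prod_right_zero[OF d0(1)] .
  hence e1: "\<beta>\<^sup>2 * (d0 \<bullet> (S22 *\<^sub>v d0)) = (b \<bullet> d0)\<^sup>2" unfolding F_bil[OF d0(1) d0(1)]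
    using comm_scalar_prod[OF d0(1) bc] by (simp add: power2_eq_square)
  have bd0: "b \<bullet> d0 \<noteq> 0" using e1 S22_pos[OF d0(1,2)] beta by auto
  define \<kappa> where "\<kappa> = \<beta>\<^sup>2 / (b \<bullet> d0)"
  define d1 where "d1 = \<kappa> \<cdot>\<^sub>v d0"
  have d1: "d1 \<in> carrier_vec m" unfolding d1_def using d0 by simp
  have comp: "\<beta>\<^sup>2 * (S22 *\<^sub>v d0) $ i = (b \<bullet> d0) * b $ i" if "i < m" for i
    using arg_cong[OF Fd0, of "\<lambda>v. v $ i"] that unfolding F_mult[OF d0(1)] using S22c bc by simp
  have Sd1: "S22 *\<^sub>v d1 = b"
  proof (rule eq_vecI)
    fix i assume "i < dim_vec b" hence i: "i < m" using bc by simp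
    have "(S22 *\<^sub>v d1) $ i = \<kappa> * (S22 *\<^sub>v d0) $ i" unfolding d1_def
      using mult_mat_vec[OF S22c d0(1)] i S22c by simp
    also have "\<dots> = b $ i" unfolding \<kappa>_def using comp[OF i] bd0 beta by (simp add: field_simps)
    finally show "(S22 *\<^sub>v d1) $ i = b $ i" .
  qed (use S22c bc in simp)
  have bd1: "b \<bullet> d1 = \<beta>\<^sup>2" unfolding d1_def \<kappa>_def using scalar_prod_smult_distrib[OF bc d0(1)] bd0 by simp
  have "b \<bullet> (inv_of S22 *\<^sub>v s12) = d1 \<bullet> (S22 *\<^sub>v (inv_of S22 *\<^sub>v s12))"
    using transpose_vec_mult_scalar[OF S22c mult_mat_vec_carrier[OF invS22(1) s12c] d1] symS22 Sd1 by simp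
  also have "\<dots> = d1 \<bullet> s12" using inv_apply[OF S22c invS22(1,2) s12c] by simp
  finally have ds: "d1 \<bullet> s12 = b \<bullet> (inv_of S22 *\<^sub>v s12)" ..
  have "d1 \<bullet> (Fm *\<^sub>v d1) = \<beta>\<^sup>2 * (d1 \<bullet> b) - (b \<bullet> d1)\<^sup>2" unfolding F_bil[OF d1 d1] Sd1
    by (simp add: power2_eq_square)
  also have "\<dots> = 0" using bd1 comm_scalar_prod[OF d1 bc] by (simp add: power2_eq_square)
  finally show ?thesis using d1 Sd1 bd1 ds by blast
qed

lemma dp: "d \<in> carrier_vec m \<Longrightarrow> d \<bullet> p = a * (b \<bullet> d) - \<beta>\<^sup>2 * (s12 \<bullet> d)"
  unfolding p_def using bc s12c comm_scalar_prod[of d m b] comm_scalar_prod[of d m s12]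
  by (simp add: scalar_prod_minus_distrib[of _ m] scalar_prod_smult_distrib[of _ m])

lemma q_line: assumes d: "d \<in> carrier_vec m"
  shows "q d = q (0\<^sub>v m) - d \<bullet> (Fm *\<^sub>v d) + 2 * (d \<bullet> p)"
proof -
  have "Fm *\<^sub>v 0\<^sub>v m = 0\<^sub>v m" using Fc by (intro eq_vecI) auto
  hence "d \<bullet> (Fm *\<^sub>v 0\<^sub>v m) = 0" using scalar_prod_right_zero[OF d] by simp
  moreover have "0\<^sub>v m + d = d" using d by simp
  ultimately show ?thesis using q_shift[OF zero_carrier_vec d] by simp
qed

lemma zero_nec: assumes lam: "min_eigenvalue Fm = 0" and u: "u \<in> carrier_vec m" and f: "feas u"
  shows "a - b \<bullet> (inv_of S22 *\<^sub>v s12) > 0"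
proof -
  obtain d1 where d1: "d1 \<in> carrier_vec m" "S22 *\<^sub>v d1 = b" "b \<bullet> d1 = \<beta>\<^sup>2"
    "d1 \<bullet> s12 = b \<bullet> (inv_of S22 *\<^sub>v s12)" using zero_d1[OF lam] by blast
  define yd where "yd = vCons 0 d1"
  define y where "y = vCons 1 u"
  have yd: "yd \<in> carrier_vec (Suc m)" unfolding yd_def using d1 by simp
  have y: "y \<in> carrier_vec (Suc m)" unfolding y_def using u by simp
  have "0 \<cdot>\<^sub>v s12 + S22 *\<^sub>v d1 = b" unfolding d1(2) using s12c bc by (intro eq_vecI) auto
  hence Syd: "S *\<^sub>v yd = vCons (s12 \<bullet> d1) b" unfolding yd_def S_vCons[OF d1(1)] by simp
  have "yd \<bullet> (S *\<^sub>v y) = (S *\<^sub>v yd) \<bullet> y"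
    using transpose_vec_mult_scalar[OF Sc y yd] symS by simp
  also have "\<dots> = s12 \<bullet> d1 + b \<bullet> u" unfolding Syd y_def by (simp add: scalar_prod_vCons)
  finally have X: "yd \<bullet> (S *\<^sub>v y) = s12 \<bullet> d1 + b \<bullet> u" .
  have Qyd: "Qs yd = \<beta>\<^sup>2" unfolding Qs_def Syd unfolding yd_def using d1 comm_scalar_prod[OF d1(1) bc]
    by (simp add: scalar_prod_vCons)
  have ind: "yd + t \<cdot>\<^sub>v y \<noteq> 0\<^sub>v (Suc m)" for t
  proof
    assume z: "yd + t \<cdot>\<^sub>v y = 0\<^sub>v (Suc m)"
    have "t = 0" using arg_cong[OF z, of "\<lambda>v. v $ 0"] y yd unfolding yd_def y_def by simp
    moreover have "yd + 0 \<cdot>\<^sub>v y = yd" using y yd by (intro eq_vecI) auto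
    ultimately have "yd = 0\<^sub>v (Suc m)" using z by simp
    hence "d1 = 0\<^sub>v m" unfolding yd_def using vCons0 by simp
    thus False using d1(3) beta bc by simp
  qed
  have y0: "y \<noteq> 0\<^sub>v (Suc m)" unfolding y_def using vCons0 by simp
  have "(s12 \<bullet> d1 + b \<bullet> u)\<^sup>2 < \<beta>\<^sup>2 * Qf u" using CS_strict[OF yd y ind y0] X Qyd unfolding Qf_def y_def by simp
  hence "sqrt ((s12 \<bullet> d1 + b \<bullet> u)\<^sup>2) < sqrt (\<beta>\<^sup>2 * Qf u)" by (rule real_sqrt_less_mono)
  hence "\<bar>s12 \<bullet> d1 + b \<bullet> u\<bar> < \<beta> * sqrt (Qf u)" using beta by (simp add: real_sqrt_mult)
  hence "s12 \<bullet> d1 + b \<bullet> u < a + b \<bullet> u" using feas_D(3)[OF f u] by linarith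
  thus ?thesis using d1(4) comm_scalar_prod[OF d1(1) s12c] by simp
qed

lemma zero_suff: assumes lam: "min_eigenvalue Fm = 0" and sp: "a - b \<bullet> (inv_of S22 *\<^sub>v s12) > 0"
  shows "\<exists>u \<in> carrier_vec m. feas u"
proof -
  obtain d1 where d1: "d1 \<in> carrier_vec m" "S22 *\<^sub>v d1 = b" "b \<bullet> d1 = \<beta>\<^sup>2"
    "d1 \<bullet> s12 = b \<bullet> (inv_of S22 *\<^sub>v s12)" "d1 \<bullet> (Fm *\<^sub>v d1) = 0" using zero_d1[OF lam] by blast
  define s where "s = a - d1 \<bullet> s12"
  have s: "s > 0" unfolding s_def using sp d1(4) by simp
  define q0 where "q0 = q (0\<^sub>v m)"
  define T where "T = \<bar>q0\<bar> / (2 * \<beta>\<^sup>2 * s) + \<bar>a\<bar> / \<beta>\<^sup>2"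
  have b2: "\<beta>\<^sup>2 > 0" using beta by simp
  define u where "u = T \<cdot>\<^sub>v d1"
  have u: "u \<in> carrier_vec m" unfolding u_def using d1 by simp
  have d1p: "d1 \<bullet> p = \<beta>\<^sup>2 * s" using dp[OF d1(1)] comm_scalar_prod[OF s12c d1(1)] d1(3)
    unfolding s_def by (simp add: algebra_simps)
  have up: "u \<bullet> p = T * (\<beta>\<^sup>2 * s)" unfolding u_def
    using scalar_prod_smult_left[of d1 p T] d1 pc d1p by simp
  have uFu: "u \<bullet> (Fm *\<^sub>v u) = 0" unfolding u_def F_qf_smult[OF d1(1)] d1(5) by simp
  have qu: "q u = q0 + 2 * T * \<beta>\<^sup>2 * s" unfolding q_line[OF u] up uFu q0_def by simp
  also have "2 * T * \<beta>\<^sup>2 * s = \<bar>q0\<bar> + 2 * \<bar>a\<bar> * s" unfolding T_def using s b2 by (simp add: field_simps)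
  finally have "q u \<ge> 0" using s by (smt (verit) abs_ge_zero mult_nonneg_nonneg)
  moreover have "a + b \<bullet> u \<ge> 0"
  proof -
    have "b \<bullet> u = T * \<beta>\<^sup>2" unfolding u_def using scalar_prod_smult_distrib[OF bc d1(1)] d1(3) by simp
    also have "\<dots> = \<bar>q0\<bar> / (2 * s) + \<bar>a\<bar>" unfolding T_def using s b2 by (simp add: field_simps)
    finally show ?thesis using s by (smt (verit) abs_ge_zero divide_nonneg_pos)
  qed
  ultimately show ?thesis using feas_of u by blast
qed

end

context core begin

lemma neg_suff: assumes lam: "min_eigenvalue Fm < 0"
  shows "\<exists>u \<in> carrier_vec m. feas u"
proof -
  have "eigenvalue Fm (min_eigenvalue Fm)" using sym_eig_min(1)[OF Fc symF] m1 by simp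
  then obtain d where "eigenvector Fm d (min_eigenvalue Fm)" unfolding eigenvalue_def by blast
  hence d: "d \<in> carrier_vec m" "d \<noteq> 0\<^sub>v m" "Fm *\<^sub>v d = min_eigenvalue Fm \<cdot>\<^sub>v d"
    unfolding eigenvector_def carrier_matD(1)[OF Fc] by blast+
  have dFd: "d \<bullet> (Fm *\<^sub>v d) < 0" unfolding d(3) using self_scalar_pos[OF d(1,2)] lam d(1)
    by (simp add: mult_neg_pos)
  have bd: "b \<bullet> d \<noteq> 0"
  proof
    assume "b \<bullet> d = 0"
    hence "d \<bullet> (Fm *\<^sub>v d) = \<beta>\<^sup>2 * (d \<bullet> (S22 *\<^sub>v d))" unfolding F_bil[OF d(1) d(1)] by simp
    thus False using dFd S22_pos[OF d(1,2)] beta by (smt (verit) mult_pos_pos zero_less_power)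
  qed
  define sg :: real where "sg = (if b \<bullet> d > 0 then 1 else -1)"
  define e where "e = sg \<cdot>\<^sub>v d"
  have e: "e \<in> carrier_vec m" unfolding e_def using d by simp
  have be: "b \<bullet> e > 0" unfolding e_def sg_def using scalar_prod_smult_distrib[OF bc d(1)] bd by auto
  have eFe: "e \<bullet> (Fm *\<^sub>v e) = d \<bullet> (Fm *\<^sub>v d)" unfolding e_def F_qf_smult[OF d(1)] sg_def by simp
  define c where "c = - (e \<bullet> (Fm *\<^sub>v e))"
  have c: "c > 0" unfolding c_def eFe using dFd by simp
  define q0 where "q0 = q (0\<^sub>v m)"
  define ep where "ep = e \<bullet> p"
  define T where "T = 1 + \<bar>a\<bar> / (b \<bullet> e) + (2 * \<bar>ep\<bar> + \<bar>q0\<bar>) / c"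
  have T1: "T \<ge> 1" unfolding T_def using be c by (simp add: add_nonneg_nonneg)
  have Tc: "c * T \<ge> 2 * \<bar>ep\<bar> + \<bar>q0\<bar>"
  proof -
    have "T \<ge> (2 * \<bar>ep\<bar> + \<bar>q0\<bar>) / c" unfolding T_def using be by simp
    thus ?thesis using c by (simp add: field_simps)
  qed
  have Tb: "T * (b \<bullet> e) \<ge> \<bar>a\<bar>"
  proof -
    have "T \<ge> \<bar>a\<bar> / (b \<bullet> e)" unfolding T_def using be c by simp
    thus ?thesis using be by (simp add: field_simps)
  qed
  define u where "u = T \<cdot>\<^sub>v e"
  have u: "u \<in> carrier_vec m" unfolding u_def using e by simp
  have "q u = q0 - u \<bullet> (Fm *\<^sub>v u) + 2 * (u \<bullet> p)" using q_line[OF u] unfolding q0_def .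
  moreover have "u \<bullet> (Fm *\<^sub>v u) = T\<^sup>2 * (e \<bullet> (Fm *\<^sub>v e))" unfolding u_def F_qf_smult[OF e] ..
  moreover have "u \<bullet> p = T * ep" unfolding u_def ep_def using scalar_prod_smult_left[of e p T] e pc by simp
  ultimately have qu: "q u = q0 + c * T\<^sup>2 + 2 * T * ep" unfolding c_def by (simp add: algebra_simps)
  have "T * (c * T) \<ge> T * (2 * \<bar>ep\<bar> + \<bar>q0\<bar>)" using Tc T1 by (intro mult_left_mono) auto
  moreover have "T * \<bar>q0\<bar> \<ge> \<bar>q0\<bar>" using T1 by (simp add: mult_le_cancel_right1)
  moreover have "T * (- \<bar>ep\<bar>) \<le> T * ep" using T1 by (intro mult_left_mono) auto
  moreover have "T * (2 * \<bar>ep\<bar> + \<bar>q0\<bar>) = 2 * (T * \<bar>ep\<bar>) + T * \<bar>q0\<bar>" by (simp add: algebra_simps)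
  moreover have "c * T\<^sup>2 = T * (c * T)" by (simp add: power2_eq_square)
  moreover have "q0 + \<bar>q0\<bar> \<ge> 0" by simp
  ultimately have "q u \<ge> 0" unfolding qu by linarith
  moreover have "a + b \<bullet> u \<ge> 0" unfolding u_def using scalar_prod_smult_distrib[OF bc e] Tb by simp
  ultimately show ?thesis using feas_of u by blast
qed

lemma pos_suff: assumes lam: "min_eigenvalue Fm > 0"
  and nec: "vCons a b \<bullet> (inv_of S *\<^sub>v vCons a b) \<ge> \<beta>\<^sup>2"
  and g: "a + b \<bullet> (inv_of Fm *\<^sub>v p) \<ge> 0"
  shows "\<exists>u \<in> carrier_vec m. feas u"
proof -
  define us where "us = inv_of Fm *\<^sub>v p"
  have us: "us \<in> carrier_vec m" unfolding us_def using mult_mat_vec_carrier[OF invF(1)[OF lam] pc] .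
  have Fus: "Fm *\<^sub>v us = p" unfolding us_def using inv_apply[OF Fc invF[OF lam] pc] .
  have "q us \<ge> 0"
  proof (rule ccontr)
    assume "\<not> q us \<ge> 0"
    hence qus: "q us < 0" by simp
    have qneg: "q u < 0" if u: "u \<in> carrier_vec m" for u
    proof -
      define d where "d = u - us"
      have d: "d \<in> carrier_vec m" unfolding d_def using u us by simp
      have ud: "us + d = u" unfolding d_def using u us by (intro eq_vecI) auto
      have dFd: "d \<bullet> (Fm *\<^sub>v d) \<ge> 0"
      proof (cases "d = 0\<^sub>v m")
        case True thus ?thesis using scalar_prod_left_zero[OF mult_mat_vec_carrier[OF Fc d]] by simp
      next
        case False thus ?thesis using F_pd[OF lam d False] by simp
      qed
      thus ?thesis using q_at_opt[OF us Fus d] ud qus by simp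
    qed
    define w where "w = vCons a b"
    define z where "z = inv_of S *\<^sub>v w"
    have w: "w \<in> carrier_vec (Suc m)" unfolding w_def using bc by simp
    have z: "z \<in> carrier_vec (Suc m)" unfolding z_def using mult_mat_vec_carrier[OF invS(1) w] .
    have Sz: "S *\<^sub>v z = w" unfolding z_def using inv_apply[OF Sc invS(1,2) w] .
    have wz: "w \<bullet> z \<ge> \<beta>\<^sup>2" using nec unfolding w_def z_def .
    have Qz: "Qs z = w \<bullet> z" unfolding Qs_def Sz using comm_scalar_prod[OF z w] .
    define c where "c = z $ 0"
    define v where "v = vec m (\<lambda>i. z $ Suc i)"
    have v: "v \<in> carrier_vec m" unfolding v_def by simp
    have zv: "z = vCons c v" unfolding c_def v_def by (rule eq_vecI) (use z in \<open>auto simp: vec_index_vCons\<close>)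
    have wzv: "w \<bullet> z = a * c + b \<bullet> v" unfolding w_def zv by (simp add: scalar_prod_vCons)
    have key: "(w \<bullet> z)\<^sup>2 < \<beta>\<^sup>2 * Qs z"
    proof (cases "c = 0")
      case True
      have v0: "v \<noteq> 0\<^sub>v m"
      proof
        assume "v = 0\<^sub>v m"
        hence "z = 0\<^sub>v (Suc m)" using zv True vCons0 by simp
        hence "w \<bullet> z = 0" using scalar_prod_right_zero[OF w] by simp
        thus False using wz beta by simp
      qed
      have "0 < v \<bullet> (Fm *\<^sub>v v)" using F_pd[OF lam v v0] .
      also have "\<dots> = \<beta>\<^sup>2 * (v \<bullet> (S22 *\<^sub>v v)) - (b \<bullet> v)\<^sup>2" unfolding F_bil[OF v v]
        using comm_scalar_prod[OF v bc] by (simp add: power2_eq_square)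
      moreover have "(w \<bullet> z)\<^sup>2 = (b \<bullet> v)\<^sup>2" using wzv True by simp
      moreover have "Qs z = v \<bullet> (S22 *\<^sub>v v)" using zv Qs_vCons[OF v, of c] True by simp
      ultimately show ?thesis by simp
    next
      case False
      define v' where "v' = (1 / c) \<cdot>\<^sub>v v"
      have v': "v' \<in> carrier_vec m" unfolding v'_def using v by simp
      have "q v' < 0" using qneg[OF v'] .
      hence 1: "(a + b \<bullet> v')\<^sup>2 < \<beta>\<^sup>2 * Qf v'" unfolding q_def by simp
      have bv': "b \<bullet> v' = (b \<bullet> v) / c" unfolding v'_def using scalar_prod_smult_distrib[OF bc v] by simp
      have sv': "s12 \<bullet> v' = (s12 \<bullet> v) / c" unfolding v'_def using scalar_prod_smult_distrib[OF s12c v] by simp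
      have vv': "v' \<bullet> (S22 *\<^sub>v v') = (v \<bullet> (S22 *\<^sub>v v)) / c\<^sup>2" unfolding v'_def
        using bil_smult[OF S22c smult_carrier_vec[THEN iffD2, OF v] v, of "1/c" "1/c"] bil_smult[OF S22c v v, of "1/c"]
        by (simp add: power2_eq_square)
      have e1: "(w \<bullet> z)\<^sup>2 = c\<^sup>2 * (a + b \<bullet> v')\<^sup>2" unfolding bv' using wzv False
        by (simp add: power2_eq_square field_simps)
      have e2: "Qs z = c\<^sup>2 * Qf v'" unfolding Qf_expand[OF v'] sv' vv' using False zv Qs_vCons[OF v, of c]
        by (simp add: power2_eq_square field_simps)
      have c2: "c\<^sup>2 > 0" using False by simp
      show ?thesis unfolding e1 e2 using mult_strict_left_mono[OF 1 c2] by (simp add: algebra_simps)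
    qed
    hence "(w \<bullet> z) * (w \<bullet> z) < \<beta>\<^sup>2 * (w \<bullet> z)" unfolding Qz by (simp add: power2_eq_square)
    moreover have "w \<bullet> z > 0" using wz beta by (smt (verit) zero_less_power)
    ultimately have "w \<bullet> z < \<beta>\<^sup>2" by simp
    thus False using wz by simp
  qed
  thus ?thesis using feas_of[OF _ _ us] g us unfolding us_def by blast
qed

lemma neg_p: assumes lam: "min_eigenvalue Fm > 0"
  shows "a - b \<bullet> (inv_of Fm *\<^sub>v (\<beta>\<^sup>2 \<cdot>\<^sub>v s12 - a \<cdot>\<^sub>v b)) = a + b \<bullet> (inv_of Fm *\<^sub>v p)"
proof -
  have "\<beta>\<^sup>2 \<cdot>\<^sub>v s12 - a \<cdot>\<^sub>v b = (-1) \<cdot>\<^sub>v p" unfolding p_def using s12c bc by (intro eq_vecI) auto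
  hence "inv_of Fm *\<^sub>v (\<beta>\<^sup>2 \<cdot>\<^sub>v s12 - a \<cdot>\<^sub>v b) = (-1) \<cdot>\<^sub>v (inv_of Fm *\<^sub>v p)"
    using mult_mat_vec[OF invF(1)[OF lam] pc] by simp
  thus ?thesis using scalar_prod_smult_distrib[OF bc mult_mat_vec_carrier[OF invF(1)[OF lam] pc]] by simp
qed

theorem core_main:
  "(\<exists>u \<in> carrier_vec m. feas u) \<longleftrightarrow>
   (vCons a b \<bullet> (inv_of S *\<^sub>v vCons a b) \<ge> \<beta>\<^sup>2 \<and>
    (min_eigenvalue Fm < 0 \<or>
     (min_eigenvalue Fm > 0 \<and> a - b \<bullet> (inv_of Fm *\<^sub>v (\<beta>\<^sup>2 \<cdot>\<^sub>v s12 - a \<cdot>\<^sub>v b)) \<ge> 0) \<or>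
     (min_eigenvalue Fm = 0 \<and> a - b \<bullet> (inv_of S22 *\<^sub>v s12) > 0)))"
proof
  assume "\<exists>u \<in> carrier_vec m. feas u"
  then obtain u where u: "u \<in> carrier_vec m" and f: "feas u" by blast
  show "vCons a b \<bullet> (inv_of S *\<^sub>v vCons a b) \<ge> \<beta>\<^sup>2 \<and>
    (min_eigenvalue Fm < 0 \<or>
     (min_eigenvalue Fm > 0 \<and> a - b \<bullet> (inv_of Fm *\<^sub>v (\<beta>\<^sup>2 \<cdot>\<^sub>v s12 - a \<cdot>\<^sub>v b)) \<ge> 0) \<or>
     (min_eigenvalue Fm = 0 \<and> a - b \<bullet> (inv_of S22 *\<^sub>v s12) > 0))"
    using nec_main[OF u f] pos_nec[OF _ u f] neg_p zero_nec[OF _ u f]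
    by (cases "min_eigenvalue Fm" "0::real" rule: linorder_cases) auto
next
  assume h: "vCons a b \<bullet> (inv_of S *\<^sub>v vCons a b) \<ge> \<beta>\<^sup>2 \<and>
    (min_eigenvalue Fm < 0 \<or>
     (min_eigenvalue Fm > 0 \<and> a - b \<bullet> (inv_of Fm *\<^sub>v (\<beta>\<^sup>2 \<cdot>\<^sub>v s12 - a \<cdot>\<^sub>v b)) \<ge> 0) \<or>
     (min_eigenvalue Fm = 0 \<and> a - b \<bullet> (inv_of S22 *\<^sub>v s12) > 0))"
  show "\<exists>u \<in> carrier_vec m. feas u"
    using h neg_suff pos_suff neg_p zero_suff by auto
qed

end


theorem theorem2:
  fixes m N :: nat
    and k :: "nat \<Rightarrow> 'a::euclidean_space \<Rightarrow> 'a \<Rightarrow> real"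
    and \<sigma>n \<beta> :: real
    and xs :: "nat \<Rightarrow> 'a" and us :: "nat \<Rightarrow> real vec" and z :: "real vec"
    and \<gamma> :: "real \<Rightarrow> real" and B :: "'a \<Rightarrow> real" and DB :: "'a \<Rightarrow> real"
    and ft :: "'a \<Rightarrow> 'a" and gt :: "'a \<Rightarrow> nat \<Rightarrow> 'a"
    and X :: "'a set" and x :: 'a
  assumes m_pos: "m \<ge> 1"
    and us_dim: "\<forall>j<N. us j \<in> carrier_vec m"
    and z_dim: "z \<in> carrier_vec N"
    and sigma_n_pos: "\<sigma>n > 0"
    and beta_pos: "\<beta> > 0"
    and gamma_K: "ext_class_K_inf \<gamma>"
    and x_in: "x \<in> X"
    and B_deriv: "(B has_derivative DB) (at x)"
    and Sigma_pd: "pos_def_mat (Sigma_B m k \<sigma>n N xs us x)"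
  shows "socp_feasible m k \<sigma>n N xs us z \<beta> \<gamma> B DB ft gt x \<longleftrightarrow>
   (let a = LfB_hat m k \<sigma>n N xs us z DB ft x + \<gamma> (B x);
        b = LgB_hat m k \<sigma>n N xs us z DB gt x;
        w = vCons a b;
        \<Sigma> = Sigma_B m k \<sigma>n N xs us x;
        sf = Sig_LfB_half m k \<sigma>n N xs us x;
        Sg = Sig_LgB_half m k \<sigma>n N xs us x;
        SgB = Sig_LgB m k \<sigma>n N xs us x;
        F = F_mat m k \<sigma>n N xs us z \<beta> DB gt x;
        lam = min_eigenvalue F
    in scalar_prod w (inv_of \<Sigma> *\<^sub>v w) \<ge> \<beta>\<^sup>2 \<and>
       (lam < 0 \<or>
        (lam > 0 \<and>
          a - scalar_prod b (inv_of F *\<^sub>v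
                 (\<beta>\<^sup>2 \<cdot>\<^sub>v (transpose_mat Sg *\<^sub>v sf) - a \<cdot>\<^sub>v b)) \<ge> 0) \<or>
        (lam = 0 \<and>
          a - scalar_prod b (inv_of SgB *\<^sub>v (transpose_mat Sg *\<^sub>v sf)) > 0)))"
proof -
  define Sig where "Sig = Sigma_B m k \<sigma>n N xs us x"
  define a where "a = LfB_hat m k \<sigma>n N xs us z DB ft x + \<gamma> (B x)"
  define b where "b = LgB_hat m k \<sigma>n N xs us z DB gt x"
  define mB where "mB = m_B m k \<sigma>n N xs us z x"
  define R where "R = sqrt_pd Sig"
  have Sc: "Sig \<in> carrier_mat (Suc m) (Suc m)" unfolding Sig_def Sigma_B_def
    by (intro carrier_matI) (simp_all add: K_sY_def)
  have bc: "b \<in> carrier_vec m" unfolding b_def LgB_hat_def Lie_gt_def by simp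
  have pdS: "pos_def_mat Sig" using Sigma_pd unfolding Sig_def .
  interpret c: core m Sig a \<beta> b using Sc pdS beta_pos bc m_pos by unfold_locales auto
  have mBd: "dim_vec mB = Suc m" unfolding mB_def m_B_def by (simp add: K_sY_def)
  have mBv: "mB = vCons (mB $ 0) (vec m (\<lambda>i. mB $ (i+1)))"
    by (rule eq_vecI) (use mBd in \<open>auto simp: vec_index_vCons\<close>)
  have feq: "socp_feasible m k \<sigma>n N xs us z \<beta> \<gamma> B DB ft gt x \<longleftrightarrow> (\<exists>u \<in> carrier_vec m. c.feas u)"
    unfolding socp_feasible_def
  proof (intro bex_cong refl)
    fix u :: "real vec" assume u: "u \<in> carrier_vec m"
    have mu: "mu_B m k \<sigma>n N xs us z x u = mB $ 0 + vec m (\<lambda>i. mB $ (i+1)) \<bullet> u"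
      unfolding mu_B_def mB_def[symmetric] yvec_def by (subst mBv) (simp add: scalar_prod_vCons)
    have bu: "b \<bullet> u = Lie_gt m DB gt x \<bullet> u + vec m (\<lambda>i. mB $ (i+1)) \<bullet> u"
      unfolding b_def LgB_hat_def mB_def[symmetric]
      by (rule add_scalar_prod_distrib[of _ m]) (use u in \<open>auto simp: Lie_gt_def\<close>)
    have sg: "sigma_B m k \<sigma>n N xs us x u = sqrt (c.Qf u)"
      unfolding sigma_B_def yvec_def Sig_def[symmetric] c.Qf_def c.Qs_def ..
    show "socp_constraint m k \<sigma>n N xs us z \<beta> \<gamma> B DB ft gt x u \<longleftrightarrow> c.feas u"
      unfolding socp_constraint_def c.feas_def unfolding mu sg bu unfolding a_def LfB_hat_def mB_def by linarith
  qed
  note R = sqrt_pd_props[OF pdS Sc, folded R_def]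
  have RE: "R $$ (i,j) = R $$ (j,i)" if "i < Suc m" "j < Suc m" for i j
    using R(1,2) that by (metis carrier_matD index_transpose_mat(1))
  have RR: "(\<Sum>l<Suc m. R $$ (l,i) * R $$ (l,j)) = Sig $$ (i,j)" if "i < Suc m" "j < Suc m" for i j
  proof -
    have "Sig $$ (i,j) = (R * R) $$ (i,j)" using R(3) by simp
    also have "\<dots> = (\<Sum>l<Suc m. R $$ (i,l) * R $$ (l,j))" using R(1) that
      by (simp add: scalar_prod_def lessThan_atLeast0)
    also have "\<dots> = (\<Sum>l<Suc m. R $$ (l,i) * R $$ (l,j))" using RE that by simp
    finally show ?thesis ..
  qed
  have RR2: "(\<Sum>l = 0..<m. R $$ (l,i) * R $$ (l,j)) + R $$ (m,i) * R $$ (m,j) = Sig $$ (i,j)"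
    if "i < Suc m" "j < Suc m" for i j using RR[OF that] by (simp add: lessThan_atLeast0)
  have SgB: "Sig_LgB m k \<sigma>n N xs us x = c.S22"
    unfolding Sig_LgB_def Sig_LgB_half_def Sig_def[symmetric] R_def[symmetric] c.S22_def
    by (rule eq_matI) (auto simp: scalar_prod_def RR2)
  have Sgsf: "transpose_mat (Sig_LgB_half m k \<sigma>n N xs us x) *\<^sub>v Sig_LfB_half m k \<sigma>n N xs us x = c.s12"
    unfolding Sig_LfB_half_def Sig_LgB_half_def Sig_def[symmetric] R_def[symmetric] c.s12_def
    by (rule eq_vecI) (use R(1) in \<open>auto simp: scalar_prod_def RR2\<close>)
  have Feq: "F_mat m k \<sigma>n N xs us z \<beta> DB gt x = c.Fm"
    unfolding c.Fm_def unfolding F_mat_def SgB b_def ..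
  show ?thesis unfolding Let_def feq Sgsf SgB Feq a_def[symmetric] b_def[symmetric] Sig_def[symmetric]
    using c.core_main by simp
qed


end
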